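(* A pair of matrices $(G,H)\in W_n$ belongs to $\Psi(\mathbb{E}^n)$ if and only if (1) $G$ is degenerate positive semidefinite, and all principal minors of $G$ of sizes $2\times2,3\times3,\dots,(n-1)\times(n-1)$ are strictly positive; and (2) no row of $H$ is a linear combination of rows of $G$. A butterfly in $\mathbb{E}^n$ is determined by a pair $(G,H)\in\Psi(\mathbb{E}^n)$ uniquely up to similarity.
   Context: $W_n$ is the space of pairs $(G,H)$ of real $n\times n$ matrices with $G$ symmetric and $g_{pp}=h_{pp}=1$ for all $p$. A butterfly in Euclidean space $\mathbb{E}^n$ consists of non-degenerate $(n-1)$-simplices $\Delta=[\mathbf{a}_1\dots\mathbf{a}_n]$ and $\Delta_p$ (spanned by $\mathbf{b}_p$ and $\mathbf{a}_q$, $q\ne p$), $p=1,\dots,n$, where $\Delta_p$ is attached to $\Delta$ along the face $F_p$ of $\Delta$ opposite $\mathbf{a}_p$. Let $\mathbf{m}$ be a unit normal to the hyperplane of $\Delta$, $\mathbf{n}_p$ the unit inner normal of $\Delta$ at its facet $F_p$ (in the hyperplane of $\Delta$), $\alpha_p$ the length of the altitude of $\Delta$ from $\mathbf{a}_p$, $\beta_p$ the length of the altitude of $\Delta_p$ from $\mathbf{b}_p$, and $\mathbf{b}_p^0$ the position of $\mathbf{b}_p$ after rotating $\Delta_p$ about $F_p$ into the hyperplane of $\Delta$ on the same side of $F_p$ as $\mathbf{a}_p$. The pair $(G,H)$ of the butterfly: $G$ is the Gram matrix of $\mathbf{n}_1,\dots,\mathbf{n}_n$, and $h_{pq}=\beta_p^{-1}(\mathbf{b}_p^0-\mathbf{a}_r,\mathbf{n}_q)$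 for any $r\ne q$. Elementary reversions act on $(G,H)$ as follows: the $a_p$-reversion replaces, for all $q\ne p$, $g_{pq}=g_{qp}$ by $-g_{pq}$, $h_{pq}$ by $h_{pq}-2g_{pq}$, $h_{qp}$ by $-h_{qp}$; the $b_p$-reversion replaces $h_{pq}$ by $2g_{pq}-h_{pq}$ for all $q\ne p$; all other entries are unchanged. $\Psi(\mathbb{E}^n)\subset W_n$ is the set of all pairs obtained by compositions of elementary reversions from pairs of butterflies in $\mathbb{E}^n$. *)

theory Defs
  imports "HOL-Analysis.Analysis"
begin

(* Points of E^n are vectors of type real^'n; the index set {1..n} of vertices is the
   same finite type 'n (so n = CARD('n)).  A butterfly is given by the vertex maps
   a, b :: 'n => real^'n; the simplex Delta_p has vertex map  a(p := b p). *)

definition nondeg_simplex :: "('n::finite \<Rightarrow> real^'n) \<Rightarrow> bool" where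
  "nondeg_simplex v \<longleftrightarrow> inj v \<and> \<not> affine_dependent (range v)"

definition butterfly :: "('n::finite \<Rightarrow> real^'n) \<Rightarrow> ('n \<Rightarrow> real^'n) \<Rightarrow> bool" where
  "butterfly a b \<longleftrightarrow> nondeg_simplex a \<and> (\<forall>p. nondeg_simplex (a(p := b p)))"

definition facet_hull :: "('n::finite \<Rightarrow> real^'n) \<Rightarrow> 'n \<Rightarrow> (real^'n) set" where
  "facet_hull a p = affine hull (a ` (UNIV - {p}))"

definition foot :: "('n::finite \<Rightarrow> real^'n) \<Rightarrow> 'n \<Rightarrow> real^'n \<Rightarrow> real^'n" where
  "foot a p x = closest_point (facet_hull a p) x"

(* unit inner normal n_p of Delta at F_p (lies in the hyperplane of Delta) *)
definition inner_normal :: "('n::finite \<Rightarrow> real^'n) \<Rightarrow> 'n \<Rightarrow> real^'n" where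
  "inner_normal a p = sgn (a p - foot a p (a p))"

definition beta :: "('n::finite \<Rightarrow> real^'n) \<Rightarrow> ('n \<Rightarrow> real^'n) \<Rightarrow> 'n \<Rightarrow> real" where
  "beta a b p = dist (b p) (foot a p (b p))"

(* b_p^0: b_p rotated about F_p into the hyperplane of Delta, on the side of a_p *)
definition b_rot :: "('n::finite \<Rightarrow> real^'n) \<Rightarrow> ('n \<Rightarrow> real^'n) \<Rightarrow> 'n \<Rightarrow> real^'n" where
  "b_rot a b p = foot a p (b p) + beta a b p *\<^sub>R inner_normal a p"

definition gram_of :: "('n::finite \<Rightarrow> real^'n) \<Rightarrow> real^'n^'n" where
  "gram_of a = (\<chi> p q. inner_normal a p \<bullet> inner_normal a q)"

definition hmat_of :: "('n::finite \<Rightarrow> real^'n) \<Rightarrow> ('n \<Rightarrow> real^'n) \<Rightarrow> real^'n^'n" where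
  "hmat_of a b = (\<chi> p q. ((b_rot a b p - a (SOME r. r \<noteq> q)) \<bullet> inner_normal a q) / beta a b p)"

definition pair_of :: "('n::finite \<Rightarrow> real^'n) \<Rightarrow> ('n \<Rightarrow> real^'n) \<Rightarrow> (real^'n^'n) \<times> (real^'n^'n)" where
  "pair_of a b = (gram_of a, hmat_of a b)"

definition inW :: "real^'n^'n \<Rightarrow> real^'n^'n \<Rightarrow> bool" where
  "inW G H \<longleftrightarrow> transpose G = G \<and> (\<forall>p. G $ p $ p = 1 \<and> H $ p $ p = 1)"

definition a_rev :: "'n::finite \<Rightarrow> (real^'n^'n) \<times> (real^'n^'n) \<Rightarrow> (real^'n^'n) \<times> (real^'n^'n)" where
  "a_rev p GH = (case GH of (G, H) \<Rightarrow>
     ((\<chi> i j. if (i = p \<and> j \<noteq> p) \<or> (j = p \<and> i \<noteq> p) then - G $ i $ j else G $ i $ j),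
      (\<chi> i j. if i = p \<and> j \<noteq> p then H $ i $ j - 2 * G $ i $ j
              else if j = p \<and> i \<noteq> p then - H $ i $ j else H $ i $ j)))"

definition b_rev :: "'n::finite \<Rightarrow> (real^'n^'n) \<times> (real^'n^'n) \<Rightarrow> (real^'n^'n) \<times> (real^'n^'n)" where
  "b_rev p GH = (case GH of (G, H) \<Rightarrow>
     (G, (\<chi> i j. if i = p \<and> j \<noteq> p then 2 * G $ i $ j - H $ i $ j else H $ i $ j)))"

inductive_set Psi :: "((real^'n::finite^'n) \<times> (real^'n^'n)) set" where
  butterfly_pair: "butterfly a b \<Longrightarrow> pair_of a b \<in> Psi"
| a_reversion: "x \<in> Psi \<Longrightarrow> a_rev p x \<in> Psi"
| b_reversion: "x \<in> Psi \<Longrightarrow> b_rev p x \<in> Psi"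

definition principal_minor :: "real^'n::finite^'n \<Rightarrow> 'n set \<Rightarrow> real" where
  "principal_minor G S = (\<Sum>\<sigma> \<in> {\<sigma>. \<sigma> permutes S}. of_int (sign \<sigma>) * (\<Prod>i\<in>S. G $ i $ \<sigma> i))"

definition degenerate_psd :: "real^'n::finite^'n \<Rightarrow> bool" where
  "degenerate_psd G \<longleftrightarrow> det G = 0 \<and> (\<forall>x. 0 \<le> x \<bullet> (G *v x))"

(* butterflies similar: all constituent simplices similar with one common ratio,
   glued in the same way (intrinsic similarity; the wings may hinge about F_p) *)
definition butterfly_similar ::
  "('n::finite \<Rightarrow> real^'n) \<Rightarrow> ('n \<Rightarrow> real^'n) \<Rightarrow> ('n \<Rightarrow> real^'n) \<Rightarrow> ('n \<Rightarrow> real^'n) \<Rightarrow> bool" where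
  "butterfly_similar a b a' b' \<longleftrightarrow> (\<exists>c>0.
      (\<forall>i j. dist (a' i) (a' j) = c * dist (a i) (a j)) \<and>
      (\<forall>p q. q \<noteq> p \<longrightarrow> dist (b' p) (a' q) = c * dist (b p) (a q)))"

end

theory Submission
  imports Defs
begin

lemma span_range_rep:
  fixes f :: "'i::finite \<Rightarrow> 'a::real_vector"
  assumes "z \<in> span (range f)"
  shows "\<exists>c. z = (\<Sum>j\<in>UNIV. c j *\<^sub>R f j)"
  using assms
proof (induction rule: span_induct_alt)
  case base
  then show ?case by (rule exI[of _ "\<lambda>_. 0"]) simp
next
  case (step c x y)
  then obtain d where d: "y = (\<Sum>j\<in>UNIV. d j *\<^sub>R f j)" by blast
  from step obtain k where k: "x = f k" by blast
  have "c *\<^sub>R x + y = (\<Sum>j\<in>UNIV. (d j + (if j = k then c else 0)) *\<^sub>R f j)"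
    by (simp add: d k scaleR_add_left sum.distrib if_distrib[of "\<lambda>t. t *\<^sub>R _"] cong: if_cong)
  then show ?case by (intro exI[where x="\<lambda>j. d j + (if j = k then c else 0)"])
qed

lemma orth_span_zero:
  fixes z :: "'a::real_inner"
  assumes "z \<in> span X" "\<And>x. x \<in> X \<Longrightarrow> inner z x = 0"
  shows "z = 0"
proof -
  have "orthogonal z z"
    using orthogonal_to_span[OF assms(1), of z] assms(2) by (simp add: orthogonal_def)
  then show ?thesis by (simp add: orthogonal_def)
qed

lemma quad_form:
  fixes G :: "real^'n::finite^'n"
  assumes "\<And>i j. G $ i $ j = inner (N i) (N j)"
  shows "(G *v x) $ i = inner (N i) (\<Sum>j\<in>UNIV. (x $ j) *\<^sub>R N j)"
    and "inner x (G *v x) = inner (\<Sum>j\<in>UNIV. (x $ j) *\<^sub>R N j) (\<Sum>j\<in>UNIV. (x $ j) *\<^sub>R N j)"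
proof -
  show 1: "(G *v x) $ i = inner (N i) (\<Sum>j\<in>UNIV. (x $ j) *\<^sub>R N j)" for i
    by (simp add: matrix_vector_mult_def assms inner_sum_right mult.commute)
  show "inner x (G *v x) = inner (\<Sum>j\<in>UNIV. (x $ j) *\<^sub>R N j) (\<Sum>j\<in>UNIV. (x $ j) *\<^sub>R N j)"
    by (simp add: inner_vec_def 1 inner_sum_left inner_sum_right sum_distrib_left)
       (auto intro!: sum.cong simp: inner_commute)
qed

lemma psd_kernel:
  fixes G :: "real^'n::finite^'n"
  assumes sym: "transpose G = G" and psd: "\<And>y. 0 \<le> inner y (G *v y)" and z: "inner x (G *v x) = 0"
  shows "G *v x = 0"
proof -
  have symm: "inner y (G *v x) = inner x (G *v y)" for x y
  proof -
    have "inner y (G *v x) = inner (y v* G) x"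
      by (metis dot_lmul_matrix inner_commute)
    also have "y v* G = transpose G *v y" by (simp add: vector_transpose_matrix)
    finally show ?thesis using sym by (simp add: inner_commute)
  qed
  let ?y = "G *v x"
  let ?A = "inner ?y (G *v x)" and ?B = "inner ?y (G *v ?y)"
  have q: "0 \<le> 2 * t * ?A + t^2 * ?B" for t
  proof -
    have "0 \<le> inner (x + t *\<^sub>R ?y) (G *v (x + t *\<^sub>R ?y))" by (rule psd)
    also have "\<dots> = inner x (G *v x) + t * inner ?y (G *v x) + t * inner x (G *v ?y) + t^2 * ?B"
      by (simp add: matrix_vector_right_distrib inner_add_left inner_add_right
          matrix_vector_mult_scaleR power2_eq_square algebra_simps)
    also have "\<dots> = 2 * t * ?A + t^2 * ?B" using z symm[of ?y x] by simp
    finally show ?thesis .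
  qed
  have B: "0 \<le> ?B" by (rule psd)
  have "?A = 0"
  proof (rule ccontr)
    assume A: "?A \<noteq> 0"
    define t where "t = - ?A / (?B + 1)"
    have "0 \<le> 2 * t * ?A + t^2 * ?B" by (rule q)
    moreover have "t^2 * ?B \<le> t^2 * (?B + 1)" by (intro mult_left_mono) auto
    moreover have "t^2 * (?B + 1) = - t * ?A"
    proof -
      have "\<And>a b::real. 0 \<le> b \<Longrightarrow> (- a / (b + 1))^2 * (b + 1) = - (- a / (b + 1)) * a"
        by (simp add: power2_eq_square field_simps add_nonneg_eq_0_iff)
      then show ?thesis using B unfolding t_def by blast
    qed
    moreover have "t * ?A < 0" using A B
      by (simp add: t_def mult_less_0_iff) 
    ultimately show False by linarith
  qed
  then show ?thesis by simp
qed

lemma det_zero_kernel: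
  fixes A :: "real^'n::finite^'n"
  shows "det A = 0 \<longleftrightarrow> (\<exists>x. x \<noteq> 0 \<and> A *v x = 0)"
proof -
  have "det A \<noteq> 0 \<longleftrightarrow> inj ((*v) A)"
    using det_nz_iff_inj[of "(*v) A"] by (simp add: matrix_of_matrix_vector_mul)
  also have "\<dots> \<longleftrightarrow> (\<forall>x. A *v x = 0 \<longrightarrow> x = 0)"
    by (simp add: linear_injective_0 matrix_vector_mul_linear)
  finally show ?thesis by blast
qed

lemma span_image_rep:
  fixes f :: "'i \<Rightarrow> 'a::real_vector"
  assumes "z \<in> span (f ` S)" "finite S"
  shows "\<exists>c. z = (\<Sum>j\<in>S. c j *\<^sub>R f j)"
  using assms(1)
proof (induction rule: span_induct_alt)
  case base
  then show ?case by (rule exI[of _ "\<lambda>_. 0"]) simp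
next
  case (step c x y)
  then obtain d where d: "y = (\<Sum>j\<in>S. d j *\<^sub>R f j)" by blast
  from step obtain k where k: "x = f k" "k \<in> S" by blast
  have "c *\<^sub>R x + y = (\<Sum>j\<in>S. (d j + (if j = k then c else 0)) *\<^sub>R f j)"
    using k assms(2)
    by (simp add: d scaleR_add_left sum.distrib if_distrib[of "\<lambda>t. t *\<^sub>R _"] cong: if_cong)
  then show ?case by (intro exI[where x="\<lambda>j. d j + (if j = k then c else 0)"])
qed

lemma sym_entry: "transpose G = G \<Longrightarrow> G $ i $ j = G $ j $ i"
  by (metis transpose_def vec_lambda_beta)

lemma sym_quad:
  fixes G :: "real^'n::finite^'n"
  assumes sym: "transpose G = G"
  shows "inner y (G *v x) = inner x (G *v y)"
proof -
  have "inner y (G *v x) = inner (y v* G) x"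
    by (metis dot_lmul_matrix)
  also have "y v* G = transpose G *v y" by (simp add: vector_transpose_matrix)
  finally show ?thesis using sym by (simp add: inner_commute)
qed

lemma supp_mult:
  fixes G :: "real^'n::finite^'n"
  assumes "\<And>i. i \<notin> S \<Longrightarrow> x $ i = 0"
  shows "(G *v x) $ k = (\<Sum>i\<in>S. G $ k $ i * x $ i)"
  unfolding matrix_vector_mult_def using assms
  by (simp, intro sum.mono_neutral_right) auto

lemma supp_quad:
  fixes G :: "real^'n::finite^'n"
  assumes "\<And>i. i \<notin> S \<Longrightarrow> x $ i = 0"
    and gram: "\<And>i j. i \<in> S \<Longrightarrow> j \<in> S \<Longrightarrow> G $ i $ j = inner (N i) (N j)"
  shows "inner x (G *v x) = inner (\<Sum>i\<in>S. x $ i *\<^sub>R N i) (\<Sum>i\<in>S. x $ i *\<^sub>R N i)"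
proof -
  have "inner x (G *v x) = (\<Sum>i\<in>S. x $ i * (G *v x) $ i)"
    unfolding inner_vec_def inner_real_def using assms(1)
    by (intro sum.mono_neutral_right) auto
  also have "\<dots> = (\<Sum>i\<in>S. x $ i * (\<Sum>j\<in>S. G $ i $ j * x $ j))"
    using supp_mult[OF assms(1)] by simp
  also have "\<dots> = (\<Sum>i\<in>S. x $ i * (\<Sum>j\<in>S. inner (N i) (N j) * x $ j))"
    using gram by (auto intro!: sum.cong)
  also have "\<dots> = inner (\<Sum>i\<in>S. x $ i *\<^sub>R N i) (\<Sum>i\<in>S. x $ i *\<^sub>R N i)"
    by (simp add: inner_sum_left inner_sum_right sum_distrib_left mult_ac)
       (auto intro!: sum.cong simp: inner_commute)
  finally show ?thesis .
qed

lemma gram_factor_set: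
  fixes G :: "real^'n::finite^'n"
  assumes sym: "transpose G = G" and psd: "\<And>x. 0 \<le> inner x (G *v x)"
  shows "\<exists>N::'n \<Rightarrow> real^'n. \<forall>i\<in>S. \<forall>j\<in>S. G $ i $ j = inner (N i) (N j)"
proof -
  have "finite S" by simp
  then show ?thesis
  proof (induction S rule: finite_induct)
    case empty
    then show ?case by simp
  next
    case (insert k S)
    then obtain N :: "'n \<Rightarrow> real^'n" where gram: "\<And>i j. i \<in> S \<Longrightarrow> j \<in> S \<Longrightarrow> G $ i $ j = inner (N i) (N j)"
      by blast
    define L where "L = (\<lambda>y::real^'n. (\<chi> i. if i \<in> S then inner (N i) y else 0) :: real^'n)"
    have linL: "linear L"
      unfolding L_def by (rule linearI) (auto simp: vec_eq_iff inner_add_right)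
    define g :: "real^'n" where "g = (\<chi> i. if i \<in> S then G $ k $ i else 0)"
    obtain y1 z where y1: "y1 \<in> span (range L)" and z: "\<And>w. w \<in> span (range L) \<Longrightarrow> orthogonal z w"
      and gyz: "g = y1 + z"
      using orthogonal_subspace_decomp_exists[of "range L" g] by metis
    have zL: "inner z (L y) = 0" for y
      using z[of "L y"] by (simp add: span_base orthogonal_def)
    define zz where "zz = (\<Sum>i\<in>S. z $ i *\<^sub>R N i)"
    have "inner z (L y) = inner zz y" for y
    proof -
      have "inner z (L y) = (\<Sum>i\<in>UNIV. z $ i * (if i \<in> S then inner (N i) y else 0))"
        by (subst inner_vec_def) (simp add: L_def inner_real_def)
      also have "\<dots> = (\<Sum>i\<in>S. z $ i * inner (N i) y)"
        by (simp add: if_distrib[of "(*) _"] sum.If_cases)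
      also have "\<dots> = inner zz y" by (simp add: zz_def inner_sum_left)
      finally show ?thesis .
    qed
    then have "inner zz zz = 0" using zL by metis
    then have zz0: "zz = 0" by simp
    define c :: "real^'n" where "c = (\<chi> i. if i \<in> S then z $ i else 0)"
    have csupp: "\<And>i. i \<notin> S \<Longrightarrow> c $ i = 0" by (simp add: c_def)
    have "inner c (G *v c) = inner (\<Sum>i\<in>S. c $ i *\<^sub>R N i) (\<Sum>i\<in>S. c $ i *\<^sub>R N i)"
      by (rule supp_quad[OF csupp gram])
    also have "(\<Sum>i\<in>S. c $ i *\<^sub>R N i) = zz" unfolding zz_def by (simp add: c_def)
    finally have "inner c (G *v c) = inner zz zz" .
    then have "G *v c = 0" using psd_kernel[OF sym psd] zz0 by simp
    moreover have "(G *v c) $ k = (\<Sum>i\<in>S. G $ k $ i * c $ i)"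
      by (rule supp_mult) (rule csupp)
    ultimately have "(\<Sum>i\<in>S. G $ k $ i * z $ i) = 0"
      by (simp add: c_def)
    then have zg: "inner z g = 0"
      by (simp add: inner_vec_def g_def if_distrib[of "(*) _"] sum.If_cases mult.commute)
    have "span (range L) = range L"
      using span_linear_image[OF linL, of UNIV] by simp
    then obtain p where p: "y1 = L p" using y1 by blast
    have "inner z y1 = 0" using zL p by simp
    then have "inner z z = 0" using zg gyz by (simp add: inner_add_right)
    then have "g = L p" using gyz p by simp
    then have pN: "inner p (N i) = G $ k $ i" if "i \<in> S" for i
    proof -
      from \<open>g = L p\<close> have "g $ i = L p $ i" by simp
      then show ?thesis using that by (simp add: L_def g_def inner_commute)
    qed
    obtain p1 p2 where p1: "p1 \<in> span (N ` S)" and p2: "\<And>w. w \<in> span (N ` S) \<Longrightarrow> orthogonal p2 w"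
      and pp: "p = p1 + p2"
      using orthogonal_subspace_decomp_exists[of "N ` S" p] by metis
    have p1N: "inner p1 (N i) = G $ k $ i" if "i \<in> S" for i
    proof -
      have "inner p2 (N i) = 0" using p2[of "N i"] that by (simp add: span_base orthogonal_def)
      then show ?thesis using pN[OF that] pp by (simp add: inner_add_left)
    qed
    obtain cc where cc: "p1 = (\<Sum>i\<in>S. cc i *\<^sub>R N i)"
      using span_image_rep[OF p1 insert.hyps(1)] by blast
    define y :: "real^'n" where "y = (\<chi> i. if i \<in> S then - cc i else 0)"
    have ysupp: "\<And>i. i \<notin> S \<Longrightarrow> y $ i = 0" by (simp add: y_def)
    have ysum: "(\<Sum>i\<in>S. y $ i *\<^sub>R N i) = - p1" by (simp add: y_def cc sum_negf)
    have yG: "(G *v y) $ k = - inner p1 p1"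
    proof -
      have "(G *v y) $ k = (\<Sum>i\<in>S. G $ k $ i * y $ i)" by (rule supp_mult) (rule ysupp)
      also have "\<dots> = (\<Sum>i\<in>S. y $ i * inner p1 (N i))" using p1N by (simp add: mult.commute)
      also have "\<dots> = inner p1 (\<Sum>i\<in>S. y $ i *\<^sub>R N i)" by (simp add: inner_sum_right)
      finally show ?thesis using ysum by simp
    qed
    have yy: "inner y (G *v y) = inner p1 p1"
      using supp_quad[of S y G N] ysupp gram ysum by simp
    define b :: "real^'n" where "b = axis k 1"
    have bG: "inner y (G *v b) = (G *v y) $ k"
    proof -
      have "inner y (G *v b) = inner b (G *v y)" by (rule sym_quad[OF sym])
      then show ?thesis by (simp add: b_def inner_axis')
    qed
    have bb1: "inner b (G *v b) = (G *v b) $ k" by (simp add: b_def inner_axis')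
    have bb2: "(G *v b) $ k = G $ k $ k"
      by (simp add: b_def matrix_vector_mult_def axis_def if_distrib[of "(*) _"] cong: if_cong)
    have bb: "inner b (G *v b) = G $ k $ k" using bb1 bb2 by simp
    have "0 \<le> inner (y + b) (G *v (y + b))" by (rule psd)
    also have "\<dots> = inner y (G *v y) + 2 * inner y (G *v b) + inner b (G *v b)"
      using sym_quad[OF sym, of b y]
      by (simp add: matrix_vector_right_distrib inner_add_left inner_add_right)
    finally have Gkk: "inner p1 p1 \<le> G $ k $ k" using yy bG yG bb by simp
    have "dim (N ` S) \<le> card (N ` S)" by (rule dim_le_card) (auto intro: span_base insert.hyps)
    also have "\<dots> \<le> card S" by (rule card_image_le) (rule insert.hyps)
    also have "card S < card (UNIV :: 'n set)"
      using insert.hyps(2) by (intro psubset_card_mono) auto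
    finally have "dim (N ` S) < DIM(real^'n)" by simp
    then obtain e where e0: "e \<noteq> 0" and eorth: "\<And>w. w \<in> span (N ` S) \<Longrightarrow> orthogonal e w"
      using orthogonal_to_subspace_exists by blast
    define e1 where "e1 = e /\<^sub>R norm e"
    have e1n: "inner e1 e1 = 1" using e0 by (simp add: e1_def dot_square_norm)
    have e1o: "inner e1 w = 0" if "w \<in> span (N ` S)" for w
      using eorth[OF that] by (simp add: e1_def orthogonal_def)
    define v where "v = p1 + sqrt (G $ k $ k - inner p1 p1) *\<^sub>R e1"
    have vN: "inner v (N i) = G $ k $ i" if "i \<in> S" for i
      using e1o[of "N i"] that p1N[OF that] by (simp add: v_def inner_add_left span_base)
    have vv: "inner v v = G $ k $ k"
    proof -
      have "inner e1 p1 = 0" using e1o[OF p1] .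
      then show ?thesis using Gkk e1n
        by (simp add: v_def inner_add_left inner_add_right inner_commute power2_eq_square[symmetric])
    qed
    show ?case
    proof (intro exI[of _ "N(k := v)"] ballI)
      fix i j assume "i \<in> insert k S" "j \<in> insert k S"
      then show "G $ i $ j = inner ((N(k := v)) i) ((N(k := v)) j)"
        using gram vN vv insert.hyps(2) sym_entry[OF sym]
        by (auto simp: inner_commute)
    qed
  qed
qed

definition embed :: "real^'n::finite^'n \<Rightarrow> 'n set \<Rightarrow> real^'n^'n" where
  "embed G S = (\<chi> i j. if i \<in> S \<and> j \<in> S then G $ i $ j else if i = j then 1 else 0)"

lemma det_embed:
  fixes G :: "real^'n::finite^'n"
  shows "det (embed G S) = principal_minor G S"
proof -
  let ?t = "\<lambda>p::'n\<Rightarrow>'n. of_int (sign p) * (\<Prod>i\<in>UNIV. embed G S $ i $ p i)"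
  have "det (embed G S) = sum ?t {p. p permutes (UNIV::'n set)}" by (simp add: det_def)
  also have "\<dots> = sum ?t {p. p permutes S}"
  proof (rule sum.mono_neutral_right)
    show "finite {p. p permutes (UNIV::'n set)}" by (simp add: finite_permutations)
    show "{p. p permutes S} \<subseteq> {p. p permutes (UNIV::'n set)}"
      by (auto intro: permutes_subset)
    show "\<forall>p\<in>{p. p permutes UNIV} - {p. p permutes S}. ?t p = 0"
    proof
      fix p assume p: "p \<in> {p. p permutes (UNIV::'n set)} - {p. p permutes S}"
      then have pu: "p permutes UNIV" and nps: "\<not> p permutes S" by auto
      have "\<exists>i. i \<notin> S \<and> p i \<noteq> i"
        using nps pu unfolding permutes_def by blast
      then obtain i where i: "i \<notin> S" "p i \<noteq> i" by blast
      have "embed G S $ i $ p i = 0" using i by (auto simp: embed_def)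
      then have "(\<Prod>i\<in>UNIV. embed G S $ i $ p i) = 0"
        by (intro prod_zero) auto
      then show "?t p = 0" by simp
    qed
  qed
  also have "\<dots> = (\<Sum>p\<in>{p. p permutes S}. of_int (sign p) * (\<Prod>i\<in>S. G $ i $ p i))"
  proof (rule sum.cong)
    fix p assume "p \<in> {p. p permutes S}"
    then have p: "p permutes S" by simp
    have "(\<Prod>i\<in>UNIV. embed G S $ i $ p i) = (\<Prod>i\<in>S. embed G S $ i $ p i)"
      using p by (intro prod.mono_neutral_right) (auto simp: embed_def permutes_not_in)
    also have "\<dots> = (\<Prod>i\<in>S. G $ i $ p i)"
      using p by (intro prod.cong) (auto simp: embed_def permutes_in_image)
    finally show "?t p = of_int (sign p) * (\<Prod>i\<in>S. G $ i $ p i)" by simp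
  qed simp
  finally show ?thesis by (simp add: principal_minor_def)
qed

lemma continuous_on_det_path:
  fixes f :: "real \<Rightarrow> real^'n::finite^'n"
  assumes "\<And>i j. continuous_on T (\<lambda>t. f t $ i $ j)"
  shows "continuous_on T (\<lambda>t. det (f t))"
  unfolding det_def
  by (intro continuous_intros assms)

lemma pd_det_pos:
  fixes A :: "real^'n::finite^'n"
  assumes pd: "\<And>x. x \<noteq> 0 \<Longrightarrow> 0 < inner x (A *v x)"
  shows "det A > 0"
proof (rule ccontr)
  assume "\<not> det A > 0"
  then have le: "det A \<le> 0" by simp
  define f where "f = (\<lambda>t::real. (1 - t) *\<^sub>R A + t *\<^sub>R (mat 1 :: real^'n^'n))"
  have f0: "det (f 0) = det A" by (simp add: f_def)
  have f1: "det (f 1) = 1" by (simp add: f_def det_I)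
  have cont: "continuous_on {0..1} (\<lambda>t. det (f t))"
    by (rule continuous_on_det_path) (auto simp: f_def intro!: continuous_intros)
  obtain t where t: "0 \<le> t" "t \<le> 1" "det (f t) = 0"
    using IVT'[of "\<lambda>t. det (f t)" 0 0 1] f0 f1 le cont by auto
  then obtain x where x: "x \<noteq> 0" "f t *v x = 0" using det_zero_kernel by blast
  have "inner x (f t *v x) = (1 - t) * inner x (A *v x) + t * inner x x"
    by (simp add: f_def scaleR_matrix_vector_assoc[symmetric] matrix_vector_mult_add_rdistrib inner_add_right)
  moreover have "0 < (1 - t) * inner x (A *v x) + t * inner x x"
  proof (cases "t = 1")
    case True then show ?thesis using x by simp
  next
    case False
    then have "0 < (1 - t) * inner x (A *v x)" using t pd[OF x(1)] by simp
    moreover have "0 \<le> t * inner x x" using t by simp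
    ultimately show ?thesis by linarith
  qed
  ultimately show False using x by simp
qed

definition alph :: "('n::finite \<Rightarrow> real^'n) \<Rightarrow> 'n \<Rightarrow> real" where
  "alph a p = dist (a p) (foot a p (a p))"

definition uvec :: "('n::finite \<Rightarrow> real^'n) \<Rightarrow> 'n \<Rightarrow> real^'n" where
  "uvec a p = inverse (alph a p) *\<^sub>R inner_normal a p"

lemma ns_notin:
  assumes "nondeg_simplex v"
  shows "v p \<notin> affine hull (v ` (UNIV - {p}))"
proof -
  have inj: "inj v" using assms by (simp add: nondeg_simplex_def)
  have "range v - {v p} = v ` (UNIV - {p})" using inj by (auto dest: injD)
  moreover have "v p \<notin> affine hull (range v - {v p})"
    using assms unfolding nondeg_simplex_def affine_dependent_def by blast
  ultimately show ?thesis by simp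
qed

lemma ns_crit:
  fixes v :: "'n::finite \<Rightarrow> real^'n"
  assumes crit: "\<And>c. sum c UNIV = 0 \<Longrightarrow> (\<Sum>j\<in>UNIV. c j *\<^sub>R v j) = 0 \<Longrightarrow> \<forall>j. c j = 0"
  shows "nondeg_simplex v"
proof -
  have inj: "inj v"
  proof (rule injI)
    fix j k assume e: "v j = v k"
    show "j = k"
    proof (rule ccontr)
      assume jk: "j \<noteq> k"
      define c where "c = (\<lambda>i. (if i = j then 1 else 0) - (if i = k then 1 else (0::real)))"
      have s: "sum c UNIV = 0" by (simp add: c_def sum_subtractf)
      have t: "c i *\<^sub>R v i = (if i = j then v j else 0) - (if i = k then v k else 0)" for i
        by (auto simp: c_def)
      have "(\<Sum>i\<in>UNIV. c i *\<^sub>R v i) = 0" by (simp only: t sum_subtractf) (simp add: e)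
      then have "c j = 0" using crit[OF s] by blast
      then show False using jk by (simp add: c_def)
    qed
  qed
  have "\<not> affine_dependent (range v)"
  proof
    assume "affine_dependent (range v)"
    then obtain U where U: "sum U (range v) = 0" "\<exists>w\<in>range v. U w \<noteq> 0"
      "(\<Sum>w\<in>range v. U w *\<^sub>R w) = 0"
      using affine_dependent_explicit_finite[of "range v"] by auto
    have s1: "sum (\<lambda>j. U (v j)) UNIV = 0" using U(1) sum.reindex[OF inj, of U] by (simp add: o_def)
    have s2: "(\<Sum>j\<in>UNIV. U (v j) *\<^sub>R v j) = 0"
      using U(3) sum.reindex[OF inj, of "\<lambda>w. U w *\<^sub>R w"] by (simp add: o_def)
    have "\<forall>j. U (v j) = 0" using crit[OF s1 s2] .
    then show False using U(2) by auto
  qed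
  with inj show ?thesis by (simp add: nondeg_simplex_def)
qed

locale nsimp =
  fixes a :: "'n::finite \<Rightarrow> real^'n"
  assumes ns: "nondeg_simplex a" and card2: "2 \<le> CARD('n)"
begin

abbreviation "N \<equiv> inner_normal a"
abbreviation "F \<equiv> facet_hull a"
abbreviation "al \<equiv> alph a"
abbreviation "u \<equiv> uvec a"

lemma other: "\<exists>r. r \<noteq> (p::'n)"
proof (rule ccontr)
  assume "\<not> (\<exists>r. r \<noteq> p)"
  then have "(UNIV :: 'n set) = {p}" by auto
  then have "CARD('n) = 1" by (metis One_nat_def card_1_singleton_iff)
  then show False using card2 by simp
qed

definition rk :: "'n \<Rightarrow> 'n" where "rk q = (SOME r. r \<noteq> q)"

lemma rk: "rk q \<noteq> q"
  unfolding rk_def using someI_ex[OF other[of q]] .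

lemma F_aff: "affine (F p)" "closed (F p)" "convex (F p)"
  by (simp_all add: facet_hull_def)

lemma a_in_F: "r \<noteq> p \<Longrightarrow> a r \<in> F p"
  by (simp add: facet_hull_def hull_inc)

lemma F_ne: "F p \<noteq> {}"
  using a_in_F[OF rk[of p]] by auto

lemma foot_in: "foot a p x \<in> F p"
  unfolding foot_def using closest_point_in_set[OF F_aff(2) F_ne] .

lemma cp_dot: "s \<in> F p \<Longrightarrow> inner (x - foot a p x) (s - foot a p x) \<le> 0"
  unfolding foot_def by (rule closest_point_dot[OF F_aff(3) F_aff(2)])

lemma foot_orth:
  assumes s: "s \<in> F p"
  shows "inner (x - foot a p x) (s - foot a p x) = 0"
proof -
  let ?f = "foot a p x"
  have le1: "inner (x - ?f) (s - ?f) \<le> 0" by (rule cp_dot[OF s])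
  have s': "2 *\<^sub>R ?f + (-1) *\<^sub>R s \<in> F p"
    by (rule mem_affine[OF F_aff(1) foot_in s]) simp
  have "inner (x - ?f) ((2 *\<^sub>R ?f + (-1) *\<^sub>R s) - ?f) \<le> 0" by (rule cp_dot[OF s'])
  moreover have "(2 *\<^sub>R ?f + (-1) *\<^sub>R s) - ?f = ?f - s"
    by (simp add: algebra_simps scaleR_2)
  ultimately have "inner (x - ?f) (?f - s) \<le> 0" by simp
  moreover have "inner (x - ?f) (?f - s) = - inner (x - ?f) (s - ?f)"
    by (simp add: inner_diff_right)
  ultimately have "0 \<le> inner (x - ?f) (s - ?f)" by linarith
  with le1 show ?thesis by simp
qed

lemma foot_orth2:
  assumes "s \<in> F p" "s' \<in> F p"
  shows "inner (x - foot a p x) (s - s') = 0"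
proof -
  have "s - s' = (s - foot a p x) - (s' - foot a p x)" by simp
  then show ?thesis using foot_orth[OF assms(1), of x] foot_orth[OF assms(2), of x]
    by (simp add: inner_diff_right)
qed

lemma foot_unique:
  assumes g: "g \<in> F p" and orth: "\<And>s. s \<in> F p \<Longrightarrow> inner (x - g) (s - g) = 0"
  shows "foot a p x = g"
proof -
  let ?f = "foot a p x"
  have 1: "inner (x - ?f) (g - ?f) = 0" by (rule foot_orth[OF g])
  have 2: "inner (x - g) (?f - g) = 0" by (rule orth[OF foot_in])
  have "inner (g - ?f) (g - ?f) = inner (x - ?f) (g - ?f) + inner (x - g) (?f - g)"
    by (simp add: algebra_simps inner_diff_left inner_diff_right inner_commute)
  then have "inner (g - ?f) (g - ?f) = 0" using 1 2 by simp
  then show ?thesis by simp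
qed

lemma ap_notin: "a p \<notin> F p"
  using ns_notin[OF ns, of p] by (simp add: facet_hull_def)

lemma al_pos: "al p > 0"
proof -
  have "a p \<noteq> foot a p (a p)" using ap_notin foot_in by metis
  then show ?thesis by (simp add: alph_def)
qed

lemma N_eq: "N p = inverse (al p) *\<^sub>R (a p - foot a p (a p))"
  by (simp add: inner_normal_def alph_def sgn_div_norm dist_norm divide_inverse_commute)

lemma N_unit: "inner (N p) (N p) = 1" "norm (N p) = 1"
proof -
  have "a p - foot a p (a p) \<noteq> 0" using ap_notin foot_in by (metis eq_iff_diff_eq_0)
  then show "norm (N p) = 1" by (simp add: inner_normal_def norm_sgn)
  then show "inner (N p) (N p) = 1" by (simp add: dot_square_norm)
qed

lemma N_orth:
  assumes "s \<in> F p" "s' \<in> F p"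
  shows "inner (N p) (s - s') = 0"
  using foot_orth2[OF assms, of "a p"] by (simp add: N_eq)

lemma N_alpha:
  assumes "s \<in> F p"
  shows "inner (a p - s) (N p) = al p"
proof -
  let ?f = "foot a p (a p)"
  have "inner (a p - s) (N p) = inner (a p - ?f) (N p) + inner (?f - s) (N p)"
    by (simp add: inner_diff_left)
  moreover have "a p - ?f = al p *\<^sub>R N p" using al_pos[of p] by (simp add: N_eq)
  moreover have "inner (?f - s) (N p) = 0"
    using N_orth[OF foot_in assms] by (simp add: inner_commute)
  ultimately show ?thesis by (simp add: N_unit)
qed

lemma u_diff:
  "inner (u q) (a j - a k) = (if q = j then 1 else 0) - (if q = k then 1 else 0)"
proof -
  have A: "inner (N q) (a j - a k) = (if q = j then al q else 0) - (if q = k then al q else 0)"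
  proof (cases "j = k")
    case True then show ?thesis by simp
  next
    case jk: False
    show ?thesis
    proof (cases "q = j")
      case True
      then show ?thesis using N_alpha[OF a_in_F, of k q] jk by (simp add: inner_commute)
    next
      case qj: False
      show ?thesis
      proof (cases "q = k")
        case True
        then have "inner (a q - a j) (N q) = al q" using N_alpha[OF a_in_F, of j q] qj by simp
        then have "inner (N q) (a j - a q) = - al q"
          by (metis inner_commute inner_minus_right minus_diff_eq)
        then show ?thesis using True qj by simp
      next
        case False
        then show ?thesis using N_orth[OF a_in_F a_in_F, of j q k] qj by simp
      qed
    qed
  qed
  have "inner (u q) (a j - a k) = inverse (al q) * inner (N q) (a j - a k)" by (simp add: uvec_def)
  also have "\<dots> = (if q = j then 1 else 0) - (if q = k then 1 else 0)"
    using A al_pos[of q] by (cases "q = j"; cases "q = k") auto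
  finally show ?thesis .
qed

abbreviation "Dsp r \<equiv> span (range (\<lambda>j. a j - a r))"

lemma hull_diff:
  assumes "s \<in> affine hull (range a)"
  shows "s - a k \<in> Dsp r"
proof -
  obtain l where l: "sum l (range a) = 1" "(\<Sum>v\<in>range a. l v *\<^sub>R v) = s"
    using assms affine_hull_finite[of "range a"] by auto
  have "s - a k = (\<Sum>v\<in>range a. l v *\<^sub>R v) - (\<Sum>v\<in>range a. l v) *\<^sub>R a k"
    using l by simp
  also have "\<dots> = (\<Sum>v\<in>range a. l v *\<^sub>R (v - a k))"
    by (simp add: scaleR_diff_right sum_subtractf scaleR_sum_left)
  finally have e: "s - a k = (\<Sum>v\<in>range a. l v *\<^sub>R (v - a k))" .
  have "v - a k \<in> Dsp r" if v: "v \<in> range a" for v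
  proof -
    obtain j where "v = a j" using v by blast
    then have "v - a k = (a j - a r) - (a k - a r)" by simp
    then show ?thesis by (metis span_base span_diff rangeI)
  qed
  then show ?thesis unfolding e by (intro span_sum span_scale) auto
qed

lemma F_sub: "F p \<subseteq> affine hull (range a)"
  unfolding facet_hull_def by (rule hull_mono) auto

lemma N_in: "N p \<in> Dsp r"
proof -
  have "a p - foot a p (a p) = (a p - a r) - (foot a p (a p) - a r)" by simp
  moreover have "foot a p (a p) - a r \<in> Dsp r" using hull_diff F_sub foot_in by blast
  ultimately have "a p - foot a p (a p) \<in> Dsp r" by (metis span_base span_diff rangeI)
  then show ?thesis by (simp add: N_eq span_scale)
qed

lemma u_in: "u p \<in> Dsp r"
  unfolding uvec_def by (intro span_scale N_in)

lemma u_sum: "(\<Sum>q\<in>UNIV. u q) = 0"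
proof (rule orth_span_zero)
  fix r :: 'n
  show "(\<Sum>q\<in>UNIV. u q) \<in> Dsp r" by (intro span_sum u_in)
  fix x assume "x \<in> range (\<lambda>j. a j - a r)"
  then obtain j where x: "x = a j - a r" by blast
  show "inner (\<Sum>q\<in>UNIV. u q) x = 0"
    unfolding x inner_sum_left u_diff by (simp add: sum_subtractf)
qed

lemma u_rel:
  assumes "(\<Sum>q\<in>UNIV. c q *\<^sub>R u q) = 0"
  shows "c j = c k"
proof -
  have "0 = inner (\<Sum>q\<in>UNIV. c q *\<^sub>R u q) (a j - a k)" using assms by simp
  also have "\<dots> = (\<Sum>q\<in>UNIV. c q * ((if q = j then 1 else 0) - (if q = k then 1 else 0)))"
    by (simp add: inner_sum_left u_diff)
  also have "\<dots> = c j - c k"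
    by (simp add: right_diff_distrib sum_subtractf if_distrib[of "(*) _"] cong: if_cong)
  finally show ?thesis by simp
qed

lemma Dsp_zero:
  assumes z: "z \<in> Dsp r" and o: "\<And>q. inner (u q) z = 0"
  shows "z = 0"
proof -
  obtain c where c: "z = (\<Sum>j\<in>UNIV. c j *\<^sub>R (a j - a r))"
    using span_range_rep[OF z] by blast
  have cq: "c q = 0" if "q \<noteq> r" for q
  proof -
    have "0 = inner (u q) z" using o by simp
    also have "\<dots> = (\<Sum>j\<in>UNIV. c j * ((if q = j then 1 else 0) - (if q = r then 1 else 0)))"
      by (simp add: c inner_sum_right u_diff)
    also have "\<dots> = c q" using that by (simp add: if_distrib[of "(*) _"] cong: if_cong)
    finally show ?thesis by simp
  qed
  have "c j *\<^sub>R (a j - a r) = 0" for j by (cases "j = r") (simp_all add: cq)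
  then show ?thesis unfolding c by (intro sum.neutral) blast
qed

lemma span_u: "span (range u) = Dsp r"
proof
  show "span (range u) \<subseteq> Dsp r"
    by (rule span_minimal) (auto intro: u_in subspace_span)
  show "Dsp r \<subseteq> span (range u)"
  proof
    fix z assume z: "z \<in> Dsp r"
    obtain y w where y: "y \<in> span (range u)" and w: "\<And>v. v \<in> span (range u) \<Longrightarrow> orthogonal w v"
      and zyw: "z = y + w"
      using orthogonal_subspace_decomp_exists[of "range u" z] by metis
    have "span (range u) \<subseteq> Dsp r" by (rule span_minimal) (auto intro: u_in subspace_span)
    then have yD: "y \<in> Dsp r" using y by blast
    have "w = z - y" using zyw by simp
    then have "w \<in> Dsp r" using span_diff[OF z yD] by simp
    moreover have "inner (u q) w = 0" for q
      using w[of "u q"] by (simp add: span_base orthogonal_def inner_commute)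
    ultimately have "w = 0" by (rule Dsp_zero)
    then show "z \<in> span (range u)" using y zyw by simp
  qed
qed

abbreviation "D \<equiv> span (range u)"

lemma diff_in_D: "a j - a k \<in> D"
  using span_u[of k] by (auto intro: span_base)

lemma hull_in_D: "s \<in> affine hull (range a) \<Longrightarrow> s - a k \<in> D"
  using hull_diff[of s k k] span_u[of k] by simp

lemma N_in_D: "N p \<in> D"
  using N_in[of p p] span_u[of p] by simp

lemma D_zero: "z \<in> D \<Longrightarrow> (\<And>q. inner (u q) z = 0) \<Longrightarrow> z = 0"
  by (rule orth_span_zero) (auto simp: inner_commute)

lemma u_eq: "u q = inverse (al q) *\<^sub>R N q" by (simp add: uvec_def)

definition wv :: "real^'n" where "wv = (\<chi> q. inverse (al q))"

lemma gram_entry: "gram_of a $ p $ q = inner (N p) (N q)"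
  by (simp add: gram_of_def)

lemma G_w: "gram_of a *v wv = 0"
proof -
  have "(gram_of a *v wv) $ p = 0" for p
  proof -
    have "(gram_of a *v wv) $ p = inner (N p) (\<Sum>j\<in>UNIV. (wv $ j) *\<^sub>R N j)"
      by (rule quad_form(1)) (rule gram_entry)
    also have "(\<Sum>j\<in>UNIV. (wv $ j) *\<^sub>R N j) = (\<Sum>j\<in>UNIV. u j)"
      by (simp add: wv_def u_eq)
    finally show ?thesis by (simp add: u_sum)
  qed
  then show ?thesis by (simp add: vec_eq_iff)
qed

lemma G_psd: "0 \<le> inner x (gram_of a *v x)"
  using quad_form(2)[OF gram_entry, of x] by simp

lemma G_ker:
  assumes "gram_of a *v c = 0"
  shows "c = (c $ r * al r) *\<^sub>R wv"
proof -
  have "inner (\<Sum>j\<in>UNIV. (c $ j) *\<^sub>R N j) (\<Sum>j\<in>UNIV. (c $ j) *\<^sub>R N j) = 0"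
    using quad_form(2)[OF gram_entry, of c] assms by simp
  then have "(\<Sum>j\<in>UNIV. (c $ j) *\<^sub>R N j) = 0" by simp
  moreover have "(\<Sum>j\<in>UNIV. (c $ j) *\<^sub>R N j) = (\<Sum>j\<in>UNIV. (c $ j * al j) *\<^sub>R u j)"
  proof (intro sum.cong refl)
    fix j
    have "al j \<noteq> 0" using al_pos[of j] by simp
    then show "c $ j *\<^sub>R N j = (c $ j * al j) *\<^sub>R u j" by (simp add: u_eq)
  qed
  ultimately have "(\<Sum>j\<in>UNIV. (c $ j * al j) *\<^sub>R u j) = 0" by simp
  then have cj: "c $ j * al j = c $ r * al r" for j by (rule u_rel)
  define t where "t = c $ r * al r"
  have "c $ j = t * inverse (al j)" for j
  proof -
    have "al j \<noteq> 0" using al_pos[of j] by simp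
    then show ?thesis using cj[of j] unfolding t_def by (simp add: field_simps)
  qed
  then show ?thesis unfolding t_def[symmetric] by (simp add: vec_eq_iff wv_def)
qed

lemma G_sym: "transpose (gram_of a) = gram_of a"
  by (simp add: transpose_def gram_of_def inner_commute)

lemma G_diag: "gram_of a $ p $ p = 1"
  by (simp add: gram_of_def N_unit)

lemma wv_pos: "wv $ q > 0" using al_pos by (simp add: wv_def)

lemma h_formula_eq:
  "inner (x - a k) (N k) = inner (x - a (rk k)) (N k) - al k"
proof -
  have e: "inner (x - a k) (N k) = inner (x - a (rk k)) (N k) - inner (a k - a (rk k)) (N k)"
    by (simp add: inner_diff_left)
  have "inner (a k - a (rk k)) (N k) = al k" by (rule N_alpha[OF a_in_F[OF rk[of k]]])
  then show ?thesis using e by simp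
qed

lemma h_formula_ne:
  assumes "k \<noteq> j"
  shows "inner (x - a j) (N k) = inner (x - a (rk k)) (N k)"
proof -
  have v: "(x - a (rk k)) + (a (rk k) - a j) = x - a j" by simp
  have e: "inner (x - a j) (N k) = inner (x - a (rk k)) (N k) + inner (a (rk k) - a j) (N k)"
    unfolding inner_add_left[symmetric] v by (rule refl)
  have jk: "j \<noteq> k" using assms by simp
  have "inner (N k) (a (rk k) - a j) = 0" by (rule N_orth[OF a_in_F[OF rk[of k]] a_in_F[OF jk]])
  then show ?thesis using e by (simp add: inner_commute)
qed

lemma h_formula:
  "inner (x - a j) (N k) = inner (x - a (rk k)) (N k) - (if k = j then al k else 0)"
  by (cases "k = j") (simp_all add: h_formula_eq h_formula_ne)

end

lemma sq_add: "(norm (x + y))^2 = (norm x)^2 + (norm y)^2 + 2 * inner x (y::'a::real_inner)"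
  by (simp add: power2_norm_eq_inner inner_add_left inner_add_right inner_commute)

locale bfly = nsimp +
  fixes b :: "'a \<Rightarrow> real^'a"
  assumes bf: "butterfly a b"
begin

abbreviation "be \<equiv> beta a b"
abbreviation "b0 \<equiv> b_rot a b"
abbreviation "H \<equiv> hmat_of a b"

lemma b_notin: "b p \<notin> F p"
proof -
  have ns': "nondeg_simplex (a(p := b p))" using bf by (simp add: butterfly_def)
  have "(a(p := b p)) ` (UNIV - {p}) = a ` (UNIV - {p})" by auto
  then show ?thesis using ns_notin[OF ns', of p] by (simp add: facet_hull_def)
qed

lemma be_pos: "be p > 0"
proof -
  have "b p \<noteq> foot a p (b p)" using b_notin foot_in by metis
  then show ?thesis by (simp add: beta_def)
qed

lemma b0_eq: "b0 p = foot a p (b p) + be p *\<^sub>R N p"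
  by (simp add: b_rot_def)

lemma H_entry: "H $ p $ q = inner (b0 p - a (rk q)) (N q) / be p"
  by (simp add: hmat_of_def rk_def)

lemma H_diag: "H $ p $ p = 1"
proof -
  let ?f = "foot a p (b p)"
  have o: "inner (N p) (?f - a (rk p)) = 0" by (rule N_orth[OF foot_in a_in_F[OF rk[of p]]])
  have e: "b0 p - a (rk p) = (?f - a (rk p)) + be p *\<^sub>R N p" by (simp add: b0_eq)
  have "inner (b0 p - a (rk p)) (N p) = inner (?f - a (rk p)) (N p) + be p * inner (N p) (N p)"
    unfolding e by (simp only: inner_add_left inner_scaleR_left)
  also have "\<dots> = be p" using o N_unit(1)[of p] by (simp add: inner_commute)
  finally show ?thesis using be_pos[of p] by (simp add: H_entry)
qed

lemma u_b0:
  "inner (u k) (b0 p - a j) = be p * H $ p $ k * inverse (al k) - (if k = j then 1 else 0)"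
proof -
  have "inner (u k) (b0 p - a j) = inverse (al k) * inner (b0 p - a j) (N k)"
    by (simp add: u_eq inner_commute)
  also have "inner (b0 p - a j) (N k) = be p * H $ p $ k - (if k = j then al k else 0)"
    using h_formula[of "b0 p" j k] be_pos[of p] by (simp add: H_entry)
  finally have X: "inner (u k) (b0 p - a j) = inverse (al k) * (be p * H $ p $ k - (if k = j then al k else 0))" .
  have "al k \<noteq> 0" using al_pos[of k] by simp
  then show ?thesis using X by (cases "k = j") (simp_all add: field_simps)
qed

lemma H_row: "inner (row p H) wv = inverse (be p)"
proof -
  have "inner (row p H) wv = (\<Sum>q\<in>UNIV. H $ p $ q * inverse (al q))"
    by (simp add: inner_vec_def row_def wv_def inner_real_def)
  also have "\<dots> = (\<Sum>q\<in>UNIV. inverse (be p) * (inner (u q) (b0 p - a p) + (if q = p then 1 else 0)))"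
    using be_pos[of p] by (intro sum.cong refl) (simp add: u_b0 field_simps)
  also have "\<dots> = inverse (be p) * (inner (\<Sum>q\<in>UNIV. u q) (b0 p - a p) + 1)"
    by (simp add: sum_distrib_left[symmetric] sum.distrib inner_sum_left)
  also have "\<dots> = inverse (be p)" by (simp add: u_sum)
  finally show ?thesis .
qed

lemma b0_in_D: "b0 p - a q \<in> D"
proof -
  have "foot a p (b p) - a q \<in> D" using hull_in_D F_sub foot_in by blast
  moreover have "be p *\<^sub>R N p \<in> D" by (intro span_scale N_in_D)
  ultimately show ?thesis using span_add by (fastforce simp: b0_eq algebra_simps)
qed

lemma dist_b:
  assumes "q \<noteq> p"
  shows "dist (b p) (a q) = norm (b0 p - a q)"
proof -
  let ?f = "foot a p (b p)"
  have aq: "a q \<in> F p" using a_in_F[OF assms] .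
  have o1: "inner (b p - ?f) (a q - ?f) = 0" by (rule foot_orth[OF aq])
  have o1': "inner (b p - ?f) (?f - a q) = 0"
  proof -
    have "?f - a q = - (a q - ?f)" by simp
    then show ?thesis using o1 by (simp only: inner_minus_right)
  qed
  have o2: "inner (be p *\<^sub>R N p) (?f - a q) = 0" using N_orth[OF foot_in aq] by simp
  have nb: "norm (b p - ?f) = be p" by (simp add: beta_def dist_norm)
  have nN: "norm (be p *\<^sub>R N p) = be p" using be_pos[of p] N_unit(2)[of p] by simp
  have e1: "b p - a q = (b p - ?f) + (?f - a q)" by simp
  have e2: "b0 p - a q = be p *\<^sub>R N p + (?f - a q)" by (simp add: b0_eq)
  have "(norm (b p - a q))^2 = (norm (b p - ?f))^2 + (norm (?f - a q))^2"
    unfolding e1 sq_add o1' by simp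
  moreover have "(norm (b0 p - a q))^2 = (norm (be p *\<^sub>R N p))^2 + (norm (?f - a q))^2"
    unfolding e2 sq_add o2 by simp
  ultimately have "(norm (b p - a q))^2 = (norm (b0 p - a q))^2" using nb nN by simp
  then show ?thesis by (simp add: dist_norm power2_eq_iff_nonneg)
qed

end

lemma inner_sum_sum:
  "inner (\<Sum>q\<in>UNIV. m q *\<^sub>R (v q :: 'b::real_inner)) (\<Sum>l\<in>UNIV. m l *\<^sub>R v l)
     = (\<Sum>q\<in>(UNIV::'a::finite set). \<Sum>l\<in>UNIV. m q * m l * inner (v q) (v l))"
  by (simp add: inner_sum_left inner_sum_right sum_distrib_left mult_ac)
     (auto intro!: sum.cong simp: inner_commute)

lemma two_simplex_scale:
  fixes a a' :: "'n::finite \<Rightarrow> real^'n"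
  assumes A: "nsimp a" and A': "nsimp a'" and G: "gram_of a = gram_of a'"
  shows "\<exists>t>0. nsimp.wv a' = t *\<^sub>R nsimp.wv a \<and>
     (\<forall>q l. inner (uvec a' q) (uvec a' l) = t^2 * inner (uvec a q) (uvec a l)) \<and>
     (\<forall>z z'. z \<in> span (range (uvec a)) \<longrightarrow> z' \<in> span (range (uvec a')) \<longrightarrow>
        (\<forall>k. inner (uvec a' k) z' = inner (uvec a k) z) \<longrightarrow> inner z' z' = inner z z / t^2)"
proof -
  interpret A: nsimp a by (rule A)
  interpret A': nsimp a' by (rule A')
  fix r :: 'n
  have "gram_of a *v A'.wv = 0" using A'.G_w G by simp
  then have wv': "A'.wv = (A'.wv $ r * A.al r) *\<^sub>R A.wv" by (rule A.G_ker)
  define t where "t = A'.wv $ r * A.al r"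
  have tpos: "t > 0" using A'.wv_pos[of r] A.al_pos[of r] by (simp add: t_def)
  have wq: "inverse (A'.al q) = t * inverse (A.al q)" for q
    using wv' unfolding t_def[symmetric] by (simp add: vec_eq_iff A.wv_def A'.wv_def)
  have uu: "inner (uvec a' q) (uvec a' l) = t^2 * inner (uvec a q) (uvec a l)" for q l
  proof -
    have "inner (uvec a' q) (uvec a' l) = inverse (A'.al q) * inverse (A'.al l) * gram_of a' $ q $ l"
      by (simp add: A'.u_eq A'.gram_entry)
    also have "\<dots> = t^2 * (inverse (A.al q) * inverse (A.al l) * gram_of a $ q $ l)"
      by (simp add: wq G power2_eq_square)
    also have "inverse (A.al q) * inverse (A.al l) * gram_of a $ q $ l = inner (uvec a q) (uvec a l)"
      by (simp add: A.u_eq A.gram_entry)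
    finally show ?thesis .
  qed
  have key: "inner z' z' = inner z z / t^2"
    if z: "z \<in> span (range (uvec a))" and z': "z' \<in> span (range (uvec a'))"
      and zz: "\<And>k. inner (uvec a' k) z' = inner (uvec a k) z" for z z'
  proof -
    obtain m where m: "z = (\<Sum>q\<in>UNIV. m q *\<^sub>R uvec a q)" using span_range_rep[OF z] by blast
    define y where "y = (\<Sum>q\<in>UNIV. (m q / t^2) *\<^sub>R uvec a' q)"
    have yD: "y \<in> span (range (uvec a'))" unfolding y_def by (intro span_sum span_scale span_base) auto
    have uy: "inner (uvec a' k) y = inner (uvec a k) z" for k
    proof -
      have "inner (uvec a' k) y = (\<Sum>q\<in>UNIV. m q / t^2 * inner (uvec a' k) (uvec a' q))"
        by (simp add: y_def inner_sum_right)
      also have "\<dots> = (\<Sum>q\<in>UNIV. m q * inner (uvec a k) (uvec a q))"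
        using tpos by (intro sum.cong refl) (simp add: uu)
      also have "\<dots> = inner (uvec a k) z" by (simp add: m inner_sum_right mult_ac)
      finally show ?thesis .
    qed
    have "z' - y = 0"
    proof (rule A'.D_zero)
      show "z' - y \<in> span (range (uvec a'))" using z' yD by (rule span_diff)
      fix q show "inner (uvec a' q) (z' - y) = 0" using zz[of q] uy[of q] by (simp add: inner_diff_right)
    qed
    then have "z' = y" by simp
    then have "inner z' z' = (\<Sum>q\<in>UNIV. \<Sum>l\<in>UNIV. (m q / t^2) * (m l / t^2) * inner (uvec a' q) (uvec a' l))"
      unfolding y_def by (rule ssubst) (rule inner_sum_sum)
    also have "\<dots> = (\<Sum>q\<in>UNIV. \<Sum>l\<in>UNIV. m q * m l * inner (uvec a q) (uvec a l)) / t^2"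
      using tpos by (simp add: uu sum_divide_distrib power2_eq_square field_simps)
    also have "(\<Sum>q\<in>UNIV. \<Sum>l\<in>UNIV. m q * m l * inner (uvec a q) (uvec a l)) = inner z z"
      unfolding m by (rule inner_sum_sum[symmetric])
    finally show ?thesis .
  qed
  show ?thesis using tpos wv' uu key unfolding t_def[symmetric] by blast
qed

lemma norm_from_inner:
  fixes z z' :: "'a::real_inner"
  assumes "inner z' z' = inner z z / t^2" "t > 0"
  shows "norm z' = inverse t * norm z"
proof -
  have "norm z' = sqrt (inner z z / t^2)" using assms(1) by (simp add: norm_eq_sqrt_inner)
  also have "\<dots> = sqrt (inner z z) / t" using assms(2) by (simp add: real_sqrt_divide)
  finally show ?thesis by (simp add: norm_eq_sqrt_inner divide_inverse mult.commute)
qed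

lemma uniqueness:
  fixes a b a' b' :: "'n::finite \<Rightarrow> real^'n"
  assumes card2: "CARD('n) \<ge> 2" and bf: "butterfly a b" and bf': "butterfly a' b'"
    and eq: "pair_of a b = pair_of a' b'"
  shows "butterfly_similar a b a' b'"
proof -
  interpret A: bfly a b
    by unfold_locales (use bf card2 in \<open>auto simp: butterfly_def\<close>)
  interpret A': bfly a' b'
    by unfold_locales (use bf' card2 in \<open>auto simp: butterfly_def\<close>)
  have G: "gram_of a = gram_of a'" and H: "hmat_of a b = hmat_of a' b'"
    using eq by (auto simp: pair_of_def)
  obtain t where t: "t > 0" and wv: "A'.wv = t *\<^sub>R A.wv"
    and key: "\<And>z z'. z \<in> A.D \<Longrightarrow> z' \<in> A'.D \<Longrightarrow>
        (\<forall>k. inner (uvec a' k) z' = inner (uvec a k) z) \<Longrightarrow> inner z' z' = inner z z / t^2"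
    using two_simplex_scale[OF A.nsimp_axioms A'.nsimp_axioms G] by blast
  have al': "inverse (A'.al k) = t * inverse (A.al k)" for k
    using wv by (simp add: vec_eq_iff A.wv_def A'.wv_def)
  have be': "A'.be p = A.be p / t" for p
  proof -
    have "inverse (A'.be p) = inner (row p (hmat_of a' b')) A'.wv" by (simp add: A'.H_row)
    also have "\<dots> = t * inner (row p (hmat_of a b)) A.wv" by (simp add: H wv)
    also have "\<dots> = t * inverse (A.be p)" by (simp add: A.H_row)
    finally have "inverse (A'.be p) = t * inverse (A.be p)" .
    then show ?thesis using t A.be_pos[of p] A'.be_pos[of p] by (simp add: field_simps)
  qed
  show ?thesis unfolding butterfly_similar_def
  proof (intro exI[of _ "inverse t"] conjI allI impI)
    show "inverse t > 0" using t by simp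
    fix i j
    have "inner (a' i - a' j) (a' i - a' j) = inner (a i - a j) (a i - a j) / t^2"
      by (rule key[OF A.diff_in_D A'.diff_in_D]) (simp add: A.u_diff A'.u_diff)
    then show "dist (a' i) (a' j) = inverse t * dist (a i) (a j)"
      using norm_from_inner t by (simp add: dist_norm)
  next
    fix p q :: 'n assume qp: "q \<noteq> p"
    have "inner (A'.b0 p - a' q) (A'.b0 p - a' q) = inner (A.b0 p - a q) (A.b0 p - a q) / t^2"
    proof (rule key[OF A.b0_in_D A'.b0_in_D], rule allI)
      fix k
      have "A'.be p * inverse (A'.al k) = A.be p * inverse (A.al k)"
        using t by (simp add: be' al')
      then show "inner (uvec a' k) (A'.b0 p - a' q) = inner (uvec a k) (A.b0 p - a q)"
        unfolding A.u_b0 A'.u_b0 H[symmetric] by (simp add: mult_ac)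
    qed
    then have "norm (A'.b0 p - a' q) = inverse t * norm (A.b0 p - a q)"
      using norm_from_inner t by blast
    then show "dist (b' p) (a' q) = inverse t * dist (b p) (a q)"
      using A.dist_b[OF qp] A'.dist_b[OF qp] by simp
  qed
qed

definition Inv :: "real^'n::finite^'n \<Rightarrow> real^'n^'n \<Rightarrow> real^'n \<Rightarrow> bool" where
  "Inv G H w \<longleftrightarrow> inW G H \<and> (\<forall>x. 0 \<le> inner x (G *v x)) \<and> G *v w = 0 \<and> (\<forall>i. w $ i \<noteq> 0)
     \<and> (\<forall>c. G *v c = 0 \<longrightarrow> (\<exists>s. c = s *\<^sub>R w)) \<and> (\<forall>p. inner (row p H) w \<noteq> 0)"

definition eps :: "'n \<Rightarrow> 'n \<Rightarrow> real" where "eps p i = (if i = p then -1 else 1)"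

lemma eps_sq: "eps p i * eps p i = 1" by (simp add: eps_def)

lemma arev_G: "fst (a_rev p (G,H)) $ i $ j = eps p i * eps p j * G $ i $ j"
  by (auto simp: a_rev_def eps_def)

lemma arev_H: "snd (a_rev p (G,H)) $ i $ j =
   (if i = p \<and> j \<noteq> p then H $ i $ j - 2 * G $ i $ j else if j = p \<and> i \<noteq> p then - H $ i $ j else H $ i $ j)"
  by (simp add: a_rev_def)

lemma brev_G: "fst (b_rev p (G,H)) = G"
  by (simp add: b_rev_def)

lemma brev_H: "snd (b_rev p (G,H)) $ i $ j = (if i = p \<and> j \<noteq> p then 2 * G $ i $ j - H $ i $ j else H $ i $ j)"
  by (simp add: b_rev_def)

lemma arev_invol: "a_rev p (a_rev p x) = x"
proof (cases x)
  case (Pair G H)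
  show ?thesis unfolding Pair
    by (auto simp: a_rev_def vec_eq_iff)
qed

lemma brev_invol: "b_rev p (b_rev p x) = x"
proof (cases x)
  case (Pair G H)
  show ?thesis unfolding Pair
    by (auto simp: b_rev_def vec_eq_iff)
qed

lemma Psi_arev_back: "a_rev p x \<in> Psi \<Longrightarrow> x \<in> Psi"
  using Psi.a_reversion[of "a_rev p x" p] by (simp add: arev_invol)

lemma Psi_brev_back: "b_rev p x \<in> Psi \<Longrightarrow> x \<in> Psi"
  using Psi.b_reversion[of "b_rev p x" p] by (simp add: brev_invol)

lemma row_inner: "inner (row i A) x = (\<Sum>j\<in>UNIV. A $ i $ j * x $ j)"
  by (simp add: inner_vec_def row_def inner_real_def)

lemma mv_entry: "(A *v x) $ i = (\<Sum>j\<in>UNIV. A $ i $ j * x $ j)"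
  by (simp add: matrix_vector_mult_def)

lemma inv_arev:
  fixes G H :: "real^'n::finite^'n" and w :: "real^'n" and p :: 'n
  assumes I: "Inv G H w"
  defines "w' \<equiv> (\<chi> i. eps p i * w $ i)"
  shows "Inv (fst (a_rev p (G,H))) (snd (a_rev p (G,H))) w'"
    and "\<And>i. inner (row i (snd (a_rev p (G,H)))) w' = inner (row i H) w"
proof -
  let ?G = "fst (a_rev p (G,H))" and ?H = "snd (a_rev p (G,H))"
  have sym: "transpose G = G" and gd: "\<And>i. G $ i $ i = 1" and hd: "\<And>i. H $ i $ i = 1"
    using I by (auto simp: Inv_def inW_def)
  have Gw: "G *v w = 0" using I by (simp add: Inv_def)
  define E :: "real^'n \<Rightarrow> real^'n" where "E x = (\<chi> i. eps p i * x $ i)" for x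
  have GE: "(?G *v x) $ i = eps p i * (G *v E x) $ i" for x i
    by (simp add: mv_entry arev_G E_def sum_distrib_left mult_ac)
  have EE: "E (E x) = x" for x by (simp add: E_def vec_eq_iff mult.assoc[symmetric] eps_sq)
  have GEz: "?G *v x = 0 \<longleftrightarrow> G *v E x = 0" for x
  proof
    assume "?G *v x = 0"
    then have "eps p i * (G *v E x) $ i = 0" for i using GE[of x i] by simp
    moreover have "eps p i \<noteq> 0" for i by (simp add: eps_def)
    ultimately show "G *v E x = 0" by (simp add: vec_eq_iff)
  next
    assume "G *v E x = 0" then show "?G *v x = 0" by (simp add: vec_eq_iff GE)
  qed
  have quad: "inner x (?G *v x) = inner (E x) (G *v E x)" for x
    by (simp add: inner_vec_def inner_real_def GE E_def mult_ac)
  have w'E: "w' = E w" by (simp add: w'_def E_def)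
  have t: "?H $ i $ j * w' $ j = (if i = p then (H $ i $ j - 2 * G $ i $ j) * w $ j else H $ i $ j * w $ j)" for i j
    using gd[of p] hd[of p] by (auto simp: arev_H w'_def eps_def)
  have rows: "inner (row i ?H) w' = inner (row i H) w" for i
  proof -
    show ?thesis
    proof (cases "i = p")
      case True
      have "inner (row i ?H) w' = (\<Sum>j\<in>UNIV. ?H $ i $ j * w' $ j)" by (rule row_inner)
      also have "\<dots> = (\<Sum>j\<in>UNIV. (H $ i $ j - 2 * G $ i $ j) * w $ j)" using True by (simp only: t if_True simp_thms)
      also have "\<dots> = (\<Sum>j\<in>UNIV. H $ i $ j * w $ j) - 2 * (\<Sum>j\<in>UNIV. G $ i $ j * w $ j)"
        by (simp add: left_diff_distrib right_diff_distrib sum_subtractf sum_distrib_left mult_ac)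
      also have "(\<Sum>j\<in>UNIV. G $ i $ j * w $ j) = 0" using Gw by (simp add: vec_eq_iff mv_entry)
      finally show ?thesis by (simp add: row_inner)
    next
      case False
      have "inner (row i ?H) w' = (\<Sum>j\<in>UNIV. ?H $ i $ j * w' $ j)" by (rule row_inner)
      also have "\<dots> = (\<Sum>j\<in>UNIV. H $ i $ j * w $ j)" using False by (simp only: t if_False simp_thms)
      finally show ?thesis by (simp add: row_inner)
    qed
  qed
  show "\<And>i. inner (row i ?H) w' = inner (row i H) w" by (rule rows)
  have Iw: "\<forall>i. w $ i \<noteq> 0" and Ik: "\<forall>c. G *v c = 0 \<longrightarrow> (\<exists>s. c = s *\<^sub>R w)"
    and Ip: "\<forall>x. 0 \<le> inner x (G *v x)" and Ir: "\<forall>p. inner (row p H) w \<noteq> 0"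
    using I by (auto simp: Inv_def)
  have inw: "inW ?G ?H"
    unfolding inW_def
  proof (intro conjI allI)
    show "transpose ?G = ?G"
      by (simp add: vec_eq_iff transpose_def arev_G sym_entry[OF sym] mult_ac)
    fix i
    show "?G $ i $ i = 1" by (simp add: arev_G eps_sq gd)
    show "?H $ i $ i = 1" by (simp add: arev_H hd)
  qed
  have k: "\<exists>s. c = s *\<^sub>R w'" if "?G *v c = 0" for c
  proof -
    have "G *v E c = 0" using that GEz by simp
    then obtain s where "E c = s *\<^sub>R w" using Ik by blast
    then have "E (E c) = s *\<^sub>R E w" by (simp add: E_def vec_eq_iff)
    then show ?thesis using EE w'E by metis
  qed
  show "Inv ?G ?H w'"
    unfolding Inv_def
  proof (intro conjI allI impI)
    show "inW ?G ?H" by (rule inw)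
    show "0 \<le> inner x (?G *v x)" for x using Ip quad by simp
    show "?G *v w' = 0" using GEz[of w'] EE Gw w'E by simp
    show "w' $ i \<noteq> 0" for i using Iw by (simp add: w'_def eps_def)
    show "\<exists>s. c = s *\<^sub>R w'" if "?G *v c = 0" for c using k that by blast
    show "inner (row p' ?H) w' \<noteq> 0" for p' using rows Ir by simp
  qed
qed

lemma inv_brev:
  assumes I: "Inv G H w"
  shows "Inv G (snd (b_rev p (G,H))) w"
    and "inner (row p (snd (b_rev p (G,H)))) w = - inner (row p H) w"
    and "\<And>i. i \<noteq> p \<Longrightarrow> inner (row i (snd (b_rev p (G,H)))) w = inner (row i H) w"
proof -
  let ?H = "snd (b_rev p (G,H))"
  have gd: "\<And>i. G $ i $ i = 1" and hd: "\<And>i. H $ i $ i = 1"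
    using I by (auto simp: Inv_def inW_def)
  have Gw: "G *v w = 0" using I by (simp add: Inv_def)
  have t: "?H $ i $ j = (if i = p then 2 * G $ i $ j - H $ i $ j else H $ i $ j)" for i j
    using gd[of p] hd[of p] by (auto simp: brev_H)
  have rp: "inner (row p ?H) w = - inner (row p H) w"
  proof -
    have "inner (row p ?H) w = (\<Sum>j\<in>UNIV. ?H $ p $ j * w $ j)" by (rule row_inner)
    also have "\<dots> = (\<Sum>j\<in>UNIV. (2 * G $ p $ j - H $ p $ j) * w $ j)" by (simp only: t if_True simp_thms)
    also have "\<dots> = 2 * (\<Sum>j\<in>UNIV. G $ p $ j * w $ j) - (\<Sum>j\<in>UNIV. H $ p $ j * w $ j)"
      by (simp add: left_diff_distrib right_diff_distrib sum_subtractf sum_distrib_left mult_ac)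
    also have "(\<Sum>j\<in>UNIV. G $ p $ j * w $ j) = 0" using Gw by (simp add: vec_eq_iff mv_entry)
    finally show ?thesis by (simp add: row_inner)
  qed
  have ri: "inner (row i ?H) w = inner (row i H) w" if "i \<noteq> p" for i
  proof -
    have "inner (row i ?H) w = (\<Sum>j\<in>UNIV. ?H $ i $ j * w $ j)" by (rule row_inner)
    also have "\<dots> = (\<Sum>j\<in>UNIV. H $ i $ j * w $ j)" using that by (simp only: t if_False simp_thms)
    finally show ?thesis by (simp add: row_inner)
  qed
  show "inner (row p ?H) w = - inner (row p H) w" by (rule rp)
  show "\<And>i. i \<noteq> p \<Longrightarrow> inner (row i ?H) w = inner (row i H) w" by (rule ri)
  have "\<forall>q. inner (row q ?H) w \<noteq> 0"
    using I rp ri by (auto simp: Inv_def) (metis neg_equal_0_iff_equal)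
  moreover have "inW G ?H" using I by (auto simp: Inv_def inW_def t)
  ultimately show "Inv G ?H w" using I by (auto simp: Inv_def)
qed

lemma butterfly_inv:
  fixes a b :: "'n::finite \<Rightarrow> real^'n"
  assumes bf: "butterfly a b" and card2: "CARD('n) \<ge> 2"
  shows "Inv (gram_of a) (hmat_of a b) (nsimp.wv a)"
proof -
  interpret A: bfly a b
    by unfold_locales (use bf card2 in \<open>auto simp: butterfly_def\<close>)
  show ?thesis unfolding Inv_def inW_def
  proof (intro conjI allI impI)
    show "transpose (gram_of a) = gram_of a" by (rule A.G_sym)
    fix p
    show "gram_of a $ p $ p = 1" by (rule A.G_diag)
    show "hmat_of a b $ p $ p = 1" by (rule A.H_diag)
    show "inner (row p (hmat_of a b)) A.wv \<noteq> 0" using A.H_row[of p] A.be_pos[of p] by simp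
  next
    fix x show "0 \<le> inner x (gram_of a *v x)" by (rule A.G_psd)
  next
    show "gram_of a *v A.wv = 0" by (rule A.G_w)
  next
    fix i show "A.wv $ i \<noteq> 0" using A.wv_pos[of i] by simp
  next
    fix c assume "gram_of a *v c = 0"
    then show "\<exists>s. c = s *\<^sub>R A.wv" using A.G_ker by blast
  qed
qed

lemma Psi_inv:
  assumes "x \<in> Psi" and card2: "CARD('n::finite) \<ge> 2"
  shows "\<exists>w. Inv (fst x) (snd x :: real^'n^'n) w"
  using assms(1)
proof induction
  case (butterfly_pair a b)
  then show ?case using butterfly_inv[OF _ card2] by (auto simp: pair_of_def)
next
  case (a_reversion x p)
  then obtain w where w: "Inv (fst x) (snd x) w" by blast
  obtain G H where x: "x = (G, H)" by (cases x)
  show ?case using inv_arev(1)[of G H w p] w x by auto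
next
  case (b_reversion x p)
  then obtain w where w: "Inv (fst x) (snd x) w" by blast
  obtain G H where x: "x = (G, H)" by (cases x)
  have "fst (b_rev p (G, H)) = G" by (rule brev_G)
  then show ?case using inv_brev(1)[of G H w p] w x by (metis fst_conv snd_conv)
qed

definition restr :: "'n set \<Rightarrow> real^'n::finite \<Rightarrow> real^'n" where
  "restr S x = (\<chi> j. if j \<in> S then x $ j else 0)"

lemma embed_mv:
  "(embed G S *v x) $ i = (if i \<in> S then (G *v restr S x) $ i else x $ i)"
proof (cases "i \<in> S")
  case True
  have "(embed G S *v x) $ i = (\<Sum>j\<in>UNIV. G $ i $ j * restr S x $ j)"
    unfolding mv_entry using True by (intro sum.cong refl) (auto simp: embed_def restr_def)
  then show ?thesis using True by (simp add: mv_entry)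
next
  case False
  have "(embed G S *v x) $ i = (\<Sum>j\<in>UNIV. (if i = j then x $ j else 0))"
    unfolding mv_entry using False by (intro sum.cong refl) (auto simp: embed_def)
  then show ?thesis using False by simp
qed

lemma embed_quad:
  "inner x (embed G S *v x) = inner (restr S x) (G *v restr S x) + (\<Sum>i\<in>UNIV. if i \<notin> S then x $ i * x $ i else 0)"
proof -
  have "inner x (embed G S *v x) = (\<Sum>i\<in>UNIV. (if i \<in> S then restr S x $ i * (G *v restr S x) $ i else 0) +
            (if i \<notin> S then x $ i * x $ i else 0))"
    unfolding inner_vec_def inner_real_def embed_mv by (intro sum.cong refl) (simp add: restr_def)
  also have "\<dots> = inner (restr S x) (G *v restr S x) + (\<Sum>i\<in>UNIV. if i \<notin> S then x $ i * x $ i else 0)"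
    by (simp add: sum.distrib inner_vec_def inner_real_def restr_def if_distrib[of "\<lambda>t. t * _"] cong: if_cong)
  finally show ?thesis .
qed

lemma Inv_conds:
  fixes G H :: "real^'n::finite^'n"
  assumes I: "Inv G H w"
  shows "degenerate_psd G"
    and "\<And>S. card S \<le> CARD('n) - 1 \<Longrightarrow> principal_minor G S > 0"
    and "\<And>p. row p H \<notin> span (rows G)"
proof -
  have sym: "transpose G = G" and psd: "\<And>x. 0 \<le> inner x (G *v x)" and Gw: "G *v w = 0"
    and wnz: "\<And>i. w $ i \<noteq> 0" and ker: "\<And>c. G *v c = 0 \<Longrightarrow> \<exists>s. c = s *\<^sub>R w"
    and rows: "\<And>p. inner (row p H) w \<noteq> 0"
    using I by (auto simp: Inv_def inW_def)
  fix i0 :: 'n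
  have "w \<noteq> 0" using wnz[of i0] by auto
  then have "det G = 0" using Gw det_zero_kernel by blast
  then show "degenerate_psd G" using psd by (simp add: degenerate_psd_def)
next
  fix S :: "'n set" assume cS: "card S \<le> CARD('n) - 1"
  have sym: "transpose G = G" and psd: "\<And>x. 0 \<le> inner x (G *v x)"
    and wnz: "\<And>i. w $ i \<noteq> 0" and ker: "\<And>c. G *v c = 0 \<Longrightarrow> \<exists>s. c = s *\<^sub>R w"
    using I by (auto simp: Inv_def inW_def)
  have "S \<noteq> UNIV"
  proof
    assume "S = UNIV" then have "card S = CARD('n)" by simp
    moreover have "CARD('n) > 0" by simp
    ultimately show False using cS by linarith
  qed
  then obtain r where r: "r \<notin> S" by blast
  have "det (embed G S) > 0"
  proof (rule pd_det_pos)
    fix x :: "real^'n" assume x: "x \<noteq> 0"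
    show "0 < inner x (embed G S *v x)"
    proof (rule ccontr)
      assume "\<not> 0 < inner x (embed G S *v x)"
      moreover have q1: "0 \<le> inner (restr S x) (G *v restr S x)" by (rule psd)
      moreover have q2: "0 \<le> (\<Sum>i\<in>UNIV. if i \<notin> S then x $ i * x $ i else 0)"
        by (intro sum_nonneg) auto
      ultimately have z1: "inner (restr S x) (G *v restr S x) = 0"
        and z2: "(\<Sum>i\<in>UNIV. if i \<notin> S then x $ i * x $ i else 0) = 0"
        unfolding embed_quad by linarith+
      have xo: "x $ i = 0" if "i \<notin> S" for i
      proof -
        have "(if i \<notin> S then x $ i * x $ i else 0) = 0"
          using z2 sum_nonneg_eq_0_iff[of UNIV "\<lambda>i. if i \<notin> S then x $ i * x $ i else 0"]
          by auto
        then show ?thesis using that by simp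
      qed
      have "G *v restr S x = 0" by (rule psd_kernel[OF sym psd z1])
      then obtain s where s: "restr S x = s *\<^sub>R w" using ker by blast
      have "restr S x $ r = 0" using r by (simp add: restr_def)
      then have "s = 0" using s wnz[of r] by simp
      then have "restr S x = 0" using s by simp
      then have r0: "restr S x $ i = 0" for i by simp
      have "x $ i = 0" for i
      proof (cases "i \<in> S")
        case True then show ?thesis using r0[of i] by (simp add: restr_def)
      next
        case False then show ?thesis by (rule xo)
      qed
      then show False using x by (simp add: vec_eq_iff)
    qed
  qed
  then show "principal_minor G S > 0" by (simp add: det_embed)
next
  fix p
  have Gw: "G *v w = 0" and rows: "\<And>p. inner (row p H) w \<noteq> 0"
    using I by (auto simp: Inv_def)
  show "row p H \<notin> span (rows G)"
  proof
    assume h: "row p H \<in> span (rows G)"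
    have "orthogonal w y" if "y \<in> rows G" for y
    proof -
      obtain i where y: "y = row i G" using \<open>y \<in> rows G\<close> by (auto simp: rows_def)
      have "inner y w = (G *v w) $ i" by (simp add: y row_inner mv_entry)
      then show ?thesis using Gw by (simp add: orthogonal_def inner_commute)
    qed
    then have "orthogonal w (row p H)" using orthogonal_to_span[OF h] by blast
    then show False using rows[of p] by (simp add: orthogonal_def inner_commute)
  qed
qed

lemma conds_Inv:
  fixes G H :: "real^'n::finite^'n"
  assumes card2: "CARD('n) \<ge> 2" and W: "inW G H" and dp: "degenerate_psd G"
    and minors: "\<forall>S. 2 \<le> card S \<and> card S \<le> CARD('n) - 1 \<longrightarrow> principal_minor G S > 0"
    and rowsH: "\<forall>p. row p H \<notin> span (rows G)"
  shows "\<exists>w. Inv G H w"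
proof -
  have sym: "transpose G = G" and gd: "\<And>i. G $ i $ i = 1" using W by (auto simp: inW_def)
  have psd: "\<And>x. 0 \<le> inner x (G *v x)" and dG: "det G = 0" using dp by (auto simp: degenerate_psd_def)
  have nons: "det (embed G (UNIV - {r})) \<noteq> 0" for r
  proof -
    let ?S = "UNIV - {r} :: 'n set"
    have cS: "card ?S = CARD('n) - 1" by (simp add: card_Diff_singleton)
    show ?thesis
    proof (cases "card ?S \<ge> 2")
      case True
      then have "principal_minor G ?S > 0" using minors cS by auto
      then show ?thesis by (simp add: det_embed)
    next
      case False
      then have "card ?S = 1" using cS card2 by linarith
      then obtain s where s: "?S = {s}" using card_1_singleton_iff by (metis One_nat_def)
      have "embed G ?S = mat 1"
        unfolding s by (auto simp: embed_def mat_def vec_eq_iff gd)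
      then show ?thesis by (simp add: det_I)
    qed
  qed
  have kz: "x = 0" if Gx: "G *v x = 0" and xr: "x $ r = 0" for x r
  proof -
    let ?S = "UNIV - {r} :: 'n set"
    have rx: "restr ?S x = x" using xr by (auto simp: restr_def vec_eq_iff)
    have "embed G ?S *v x = 0"
      unfolding vec_eq_iff embed_mv rx using Gx xr by auto
    then show ?thesis using nons[of r] det_zero_kernel by blast
  qed
  obtain c where c0: "c \<noteq> 0" and Gc: "G *v c = 0" using dG det_zero_kernel by blast
  have cnz: "c $ i \<noteq> 0" for i using kz[OF Gc] c0 by blast
  fix r0 :: 'n
  have ker: "\<exists>s. x = s *\<^sub>R c" if Gx: "G *v x = 0" for x
  proof -
    let ?s = "x $ r0 / c $ r0"
    have "G *v (x - ?s *\<^sub>R c) = 0" using Gx Gc by (simp add: matrix_vector_mult_diff_distrib matrix_vector_mult_scaleR)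
    moreover have "(x - ?s *\<^sub>R c) $ r0 = 0" using cnz[of r0] by simp
    ultimately have "x - ?s *\<^sub>R c = 0" by (rule kz)
    then show ?thesis by (intro exI[of _ ?s]) simp
  qed
  have rowc: "inner (row i G) c = 0" for i using Gc by (simp add: row_inner mv_entry vec_eq_iff)
  have rowsc: "inner (row p H) c \<noteq> 0" for p
  proof
    assume vc: "inner (row p H) c = 0"
    obtain y z where y: "y \<in> span (rows G)" and z: "\<And>v. v \<in> span (rows G) \<Longrightarrow> orthogonal z v"
      and vyz: "row p H = y + z"
      using orthogonal_subspace_decomp_exists[of "rows G" "row p H"] by metis
    have "(G *v z) $ i = 0" for i
    proof -
      have "row i G \<in> span (rows G)" by (intro span_base) (auto simp: rows_def)
      then have "inner z (row i G) = 0" using z by (simp add: orthogonal_def)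
      then show ?thesis by (simp add: row_def mv_entry inner_vec_def inner_real_def mult.commute)
    qed
    then have "G *v z = 0" by (simp add: vec_eq_iff)
    then obtain s where s: "z = s *\<^sub>R c" using ker by blast
    have "orthogonal c y"
      by (rule orthogonal_to_span[OF y]) (auto simp: rows_def orthogonal_def inner_commute[of c] rowc)
    then have yc: "inner y c = 0" by (simp add: orthogonal_def inner_commute)
    have "inner z c = 0" using vc yc vyz by (simp add: inner_add_left)
    then have "s * inner c c = 0" using s by simp
    then have "s = 0" using c0 by simp
    then have "row p H = y" using vyz s by simp
    then show False using y rowsH by metis
  qed
  have "Inv G H c"
    unfolding Inv_def using W psd Gc cnz ker rowsc by blast
  then show ?thesis by blast
qed

lemma sum_shift:
  fixes v :: "'i::finite \<Rightarrow> 'a::real_vector"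
  assumes "sum c UNIV = 0"
  shows "(\<Sum>j\<in>UNIV. c j *\<^sub>R v j) = (\<Sum>j\<in>UNIV. c j *\<^sub>R (v j - y))"
proof -
  have "(\<Sum>j\<in>UNIV. c j *\<^sub>R (v j - y)) = (\<Sum>j\<in>UNIV. c j *\<^sub>R v j) - (\<Sum>j\<in>UNIV. c j) *\<^sub>R y"
    by (simp add: scaleR_diff_right sum_subtractf scaleR_sum_left)
  then show ?thesis using assms by simp
qed

context nsimp
begin

lemma ns_coef:
  assumes "sum c UNIV = 0" "(\<Sum>j\<in>UNIV. c j *\<^sub>R a j) = 0"
  shows "c q = 0"
proof -
  have "0 = inner (u q) (\<Sum>j\<in>UNIV. c j *\<^sub>R (a j - a q))"
    using assms sum_shift[OF assms(1), of a "a q"] by simp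
  also have "\<dots> = (\<Sum>j\<in>UNIV. c j * ((if q = j then 1 else 0) - (if q = q then 1 else 0)))"
    by (simp add: inner_sum_right u_diff)
  also have "\<dots> = c q - sum c UNIV"
    by (simp add: right_diff_distrib sum_subtractf if_distrib[of "(*) _"] cong: if_cong)
  finally show ?thesis using assms(1) by simp
qed

lemma F_orth_v:
  assumes "s \<in> F p" "s' \<in> F p"
  shows "inner ((x - foot a p x) - inner (x - foot a p x) (N p) *\<^sub>R N p) (s - s') = 0"
  using foot_orth2[OF assms, of x] N_orth[OF assms] by (simp add: inner_diff_left)

lemma foot_formula:
  assumes xD: "x - a k \<in> D"
  shows "foot a p x = x - inner (x - a (rk p)) (N p) *\<^sub>R N p"
proof -
  let ?f = "foot a p x" and ?r = "rk p"
  let ?c = "inner (x - ?f) (N p)"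
  define v where "v = (x - ?f) - ?c *\<^sub>R N p"
  have r: "?r \<noteq> p" by (rule rk)
  have ar: "a ?r \<in> F p" by (rule a_in_F[OF r])
  have xr: "x - a ?r \<in> D"
  proof -
    have "x - a ?r = (x - a k) + (a k - a ?r)" by simp
    then show ?thesis using xD diff_in_D span_add by metis
  qed
  have fr: "?f - a ?r \<in> D" using hull_in_D F_sub foot_in by blast
  have vD: "v \<in> D"
  proof -
    have "x - ?f = (x - a ?r) - (?f - a ?r)" by simp
    then have "x - ?f \<in> D" using xr fr span_diff by metis
    then show ?thesis unfolding v_def using N_in_D span_diff span_scale by metis
  qed
  have vN: "inner v (N p) = 0" by (simp add: v_def inner_diff_left N_unit)
  have vF: "inner v (s - s') = 0" if "s \<in> F p" "s' \<in> F p" for s s'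
    unfolding v_def by (rule F_orth_v[OF that])
  have vgen: "inner v (a j - a ?r) = 0" for j
  proof (cases "j = p")
    case False
    then show ?thesis using vF[OF a_in_F[OF False] ar] by simp
  next
    case True
    have e: "a p - a ?r = al p *\<^sub>R N p + (foot a p (a p) - a ?r)"
      using al_pos[of p] by (simp add: N_eq)
    have "inner v (a p - a ?r) = al p * inner v (N p) + inner v (foot a p (a p) - a ?r)"
      unfolding e by (simp only: inner_add_right inner_scaleR_right)
    also have "\<dots> = 0" using vN vF[OF foot_in ar] by simp
    finally show ?thesis using True by simp
  qed
  have "v = 0"
  proof (rule orth_span_zero)
    show "v \<in> Dsp ?r" using vD span_u[of ?r] by simp
    fix y assume "y \<in> range (\<lambda>j. a j - a ?r)"
    then show "inner v y = 0" using vgen by auto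
  qed
  then have xf: "x - ?f = ?c *\<^sub>R N p" by (simp add: v_def)
  have "?c = inner (x - a ?r) (N p)"
  proof -
    have o: "inner (?f - a ?r) (N p) = 0" using N_orth[OF foot_in ar] by (simp add: inner_commute)
    have e: "x - a ?r = (x - ?f) + (?f - a ?r)" by (simp only: add_diff_eq diff_add_cancel)
    have "inner (x - a ?r) (N p) = inner (x - ?f) (N p) + inner (?f - a ?r) (N p)"
      unfolding e by (rule inner_add_left)
    then show ?thesis using o by simp
  qed
  then have xf': "x - ?f = inner (x - a ?r) (N p) *\<^sub>R N p" using xf by simp
  have "?f = x - (x - ?f)" by (simp only: diff_diff_eq2 add_diff_cancel_left')
  then show ?thesis using xf' by simp
qed

end

lemma surj_m:
  fixes m :: "'n::finite \<Rightarrow> real^'n"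
  assumes msum: "(\<Sum>q\<in>UNIV. m q) = 0"
    and rel: "\<And>c j k. (\<Sum>q\<in>UNIV. c q *\<^sub>R m q) = 0 \<Longrightarrow> c j = c k"
    and ysum: "sum y UNIV = 0"
  shows "\<exists>x \<in> span (range m). \<forall>q. inner (m q) x = y q"
proof -
  define L where "L = (\<lambda>x::real^'n. (\<chi> q. inner (m q) x) :: real^'n)"
  have linL: "linear L"
    unfolding L_def by (rule linearI) (auto simp: vec_eq_iff inner_add_right)
  define Y :: "real^'n" where "Y = (\<chi> q. y q)"
  obtain y1 z where y1: "y1 \<in> span (range L)" and z: "\<And>v. v \<in> span (range L) \<Longrightarrow> orthogonal z v"
    and Yyz: "Y = y1 + z"
    using orthogonal_subspace_decomp_exists[of "range L" Y] by metis
  have "span (range L) = range L"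
    using span_linear_image[OF linL, of UNIV] by simp
  then obtain x1 where x1: "y1 = L x1" using y1 by blast
  have zL: "inner z (L x) = inner (\<Sum>q\<in>UNIV. z $ q *\<^sub>R m q) x" for x
  proof -
    have "inner z (L x) = (\<Sum>q\<in>UNIV. z $ q * inner (m q) x)"
      by (subst inner_vec_def) (simp add: L_def inner_real_def)
    also have "\<dots> = inner (\<Sum>q\<in>UNIV. z $ q *\<^sub>R m q) x" by (simp add: inner_sum_left)
    finally show ?thesis .
  qed
  have "inner z (L x) = 0" for x using z[of "L x"] by (simp add: span_base orthogonal_def)
  then have "inner (\<Sum>q\<in>UNIV. z $ q *\<^sub>R m q) (\<Sum>q\<in>UNIV. z $ q *\<^sub>R m q) = 0" using zL by metis
  then have zm: "(\<Sum>q\<in>UNIV. z $ q *\<^sub>R m q) = 0" by simp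
  fix r :: 'n
  have zr: "z $ q = z $ r" for q using rel[of "\<lambda>q. z $ q", OF zm] .
  have sL: "(\<Sum>q\<in>UNIV. L x1 $ q) = 0"
    using msum by (simp add: L_def inner_sum_left[symmetric])
  have "(\<Sum>q\<in>UNIV. z $ q) = (\<Sum>q\<in>UNIV. Y $ q) - (\<Sum>q\<in>UNIV. L x1 $ q)"
    using Yyz x1 by (simp add: sum_subtractf[symmetric])
  also have "\<dots> = 0" using sL ysum by (simp add: Y_def)
  finally have s0: "(\<Sum>q\<in>UNIV. z $ q) = 0" .
  have "(\<Sum>q\<in>UNIV. z $ q) = (\<Sum>q\<in>(UNIV::'n set). z $ r)" using zr by (intro sum.cong) auto
  then have "real CARD('n) * z $ r = 0" using s0 by simp
  then have "z $ r = 0" by simp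
  then have z0: "z = 0" using zr by (simp add: vec_eq_iff)
  obtain x x2 where x: "x \<in> span (range m)" and x2: "\<And>v. v \<in> span (range m) \<Longrightarrow> orthogonal x2 v"
    and xx: "x1 = x + x2"
    using orthogonal_subspace_decomp_exists[of "range m" x1] by metis
  have "inner (m q) x = y q" for q
  proof -
    have "inner x2 (m q) = 0" using x2[of "m q"] by (simp add: span_base orthogonal_def)
    then have "inner (m q) x = inner (m q) x1" by (simp add: xx inner_add_right inner_commute)
    also have "\<dots> = L x1 $ q" by (simp add: L_def)
    also have "\<dots> = y q" using Yyz x1 z0 by (simp add: Y_def vec_eq_iff)
    finally show ?thesis .
  qed
  then show ?thesis using x by blast
qed

lemma realize:
  fixes G H :: "real^'n::finite^'n" and w :: "real^'n"
  assumes card2: "CARD('n) \<ge> 2" and I: "Inv G H w" and wpos: "\<And>i. w $ i > 0"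
    and rpos: "\<And>p. inner (row p H) w > 0"
  shows "\<exists>a b. butterfly a b \<and> pair_of a b = (G, H)"
proof -
  have sym: "transpose G = G" and gd: "\<And>i. G $ i $ i = 1" and hd: "\<And>i. H $ i $ i = 1"
    and psd: "\<And>x. 0 \<le> inner x (G *v x)" and Gw: "G *v w = 0"
    and ker: "\<And>c. G *v c = 0 \<Longrightarrow> \<exists>s. c = s *\<^sub>R w"
    using I by (auto simp: Inv_def inW_def)
  obtain n :: "'n \<Rightarrow> real^'n" where gram: "\<And>i j. G $ i $ j = inner (n i) (n j)"
    using gram_factor_set[OF sym psd, of UNIV] by blast
  have nunit: "inner (n i) (n i) = 1" for i using gd[of i] gram[of i i] by simp
  have nnorm: "norm (n i) = 1" for i using nunit[of i] by (simp add: norm_eq_sqrt_inner)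
  define m where "m q = w $ q *\<^sub>R n q" for q
  have msum: "(\<Sum>q\<in>UNIV. m q) = 0"
  proof -
    have "inner (\<Sum>j\<in>UNIV. (w $ j) *\<^sub>R n j) (\<Sum>j\<in>UNIV. (w $ j) *\<^sub>R n j) = 0"
      using quad_form(2)[OF gram, of w] Gw by simp
    then show ?thesis by (simp add: m_def)
  qed
  have mrel: "c j = c k" if cm: "(\<Sum>q\<in>UNIV. c q *\<^sub>R m q) = 0" for c j k
  proof -
    define x :: "real^'n" where "x = (\<chi> q. c q * w $ q)"
    have sx: "(\<Sum>q\<in>UNIV. (x $ q) *\<^sub>R n q) = 0" using cm by (simp add: x_def m_def)
    have "(G *v x) $ i = 0" for i using quad_form(1)[OF gram, of x i] sx by simp
    then have "G *v x = 0" by (simp add: vec_eq_iff)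
    then obtain s where s: "x = s *\<^sub>R w" using ker by blast
    have "c i = s" for i
    proof -
      have "c i * w $ i = s * w $ i" using s by (simp add: x_def vec_eq_iff)
      then show ?thesis using wpos[of i] by simp
    qed
    then show ?thesis by simp
  qed
  define nn where "nn = real CARD('n)"
  have nnpos: "nn > 0" by (simp add: nn_def)
  have "\<forall>j. \<exists>x \<in> span (range m). \<forall>q. inner (m q) x = (if q = j then 1 else 0) - 1 / nn"
  proof
    fix j
    show "\<exists>x \<in> span (range m). \<forall>q. inner (m q) x = (if q = j then 1 else 0) - 1 / nn"
    proof (rule surj_m[OF msum mrel])
      show "(\<Sum>q\<in>UNIV. (if q = j then 1 else 0) - 1 / nn) = 0"
        using nnpos by (simp add: sum_subtractf nn_def)
    qed
  qed
  then obtain A where A: "\<And>j. A j \<in> span (range m)"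
    and Am: "\<And>j q. inner (m q) (A j) = (if q = j then 1 else 0) - 1 / nn"
    by metis
  have Adiff: "inner (m q) (A j - A k) = (if q = j then 1 else 0) - (if q = k then 1 else 0)" for q j k
    by (simp add: inner_diff_right Am)
  have mcoef: "inner (m q) (\<Sum>j\<in>UNIV. c j *\<^sub>R A j) = c q - sum c UNIV / nn" for q c
  proof -
    have "inner (m q) (\<Sum>j\<in>UNIV. c j *\<^sub>R A j) = (\<Sum>j\<in>UNIV. c j * ((if q = j then 1 else 0) - 1 / nn))"
      by (simp add: inner_sum_right Am)
    also have "\<dots> = c q - sum c UNIV / nn"
      by (simp add: right_diff_distrib sum_subtractf sum_divide_distrib if_distrib[of "(*) _"] cong: if_cong)
    finally show ?thesis .
  qed
  have nsA: "nondeg_simplex A"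
  proof (rule ns_crit)
    fix c assume c0: "sum c UNIV = 0" and cA: "(\<Sum>j\<in>UNIV. c j *\<^sub>R A j) = 0"
    show "\<forall>j. c j = 0"
    proof
      fix j show "c j = 0" using mcoef[of j c] c0 cA by simp
    qed
  qed
  interpret S: nsimp A by unfold_locales (use nsA card2 in auto)
  have DspA: "S.Dsp r \<subseteq> span (range m)" for r
    by (rule span_minimal) (auto intro: span_diff A subspace_span)
  have u_m: "uvec A q = m q" for q
  proof -
    let ?z = "uvec A q - m q"
    have "?z \<in> span (range m)"
      using DspA S.u_in[of q q] by (intro span_diff) (auto intro: span_base)
    then obtain c where c: "?z = (\<Sum>l\<in>UNIV. c l *\<^sub>R m l)" using span_range_rep by blast
    have "c j = c k" for j k
    proof -
      have "0 = inner ?z (A j - A k)"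
        by (simp add: inner_diff_left S.u_diff Adiff)
      also have "\<dots> = (\<Sum>l\<in>UNIV. c l * ((if l = j then 1 else 0) - (if l = k then 1 else 0)))"
        by (simp add: c inner_sum_left Adiff)
      also have "\<dots> = c j - c k"
        by (simp add: right_diff_distrib sum_subtractf if_distrib[of "(*) _"] cong: if_cong)
      finally show ?thesis by simp
    qed
    then have "?z = (\<Sum>l\<in>UNIV. c q *\<^sub>R m l)" using c by (metis (no_types, lifting) sum.cong)
    also have "\<dots> = 0" by (simp add: scaleR_sum_right[symmetric] msum)
    finally show ?thesis by simp
  qed
  have alw: "inverse (S.al q) = w $ q" for q
  proof -
    have "norm (uvec A q) = inverse (S.al q)" using S.al_pos[of q] S.N_unit(2)[of q] by (simp add: S.u_eq)
    moreover have "norm (m q) = w $ q" using wpos[of q] nnorm[of q] by (simp add: m_def)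
    ultimately show ?thesis using u_m by simp
  qed
  have NA: "inner_normal A q = n q" for q
  proof -
    have "inner_normal A q = S.al q *\<^sub>R uvec A q" using S.al_pos[of q] by (simp add: S.u_eq)
    also have "\<dots> = (S.al q * w $ q) *\<^sub>R n q" by (simp add: u_m m_def)
    also have "S.al q * w $ q = 1" using alw[of q] S.al_pos[of q] by (metis less_irrefl right_inverse)
    finally show ?thesis by simp
  qed
  have gramA: "gram_of A = G" by (simp add: gram_of_def vec_eq_iff NA gram)
  have spanD: "span (range m) = S.D" using u_m by (simp add: fun_eq_iff[symmetric] )
  define b0 where "b0 p = inverse (inner (row p H) w)" for p
  have b0pos: "b0 p > 0" for p using rpos[of p] by (simp add: b0_def)
  have "\<forall>p. \<exists>x \<in> span (range m). \<forall>q. inner (m q) x = b0 p * w $ q * H $ p $ q - 1 / nn"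
  proof
    fix p
    show "\<exists>x \<in> span (range m). \<forall>q. inner (m q) x = b0 p * w $ q * H $ p $ q - 1 / nn"
    proof (rule surj_m[OF msum mrel])
      have "(\<Sum>q\<in>UNIV. b0 p * w $ q * H $ p $ q) = b0 p * inner (row p H) w"
        by (simp add: row_inner sum_distrib_left mult_ac)
      also have "\<dots> = 1" using rpos[of p] by (simp add: b0_def)
      finally show "(\<Sum>q\<in>UNIV. b0 p * w $ q * H $ p $ q - 1 / nn) = 0"
        using nnpos by (simp add: sum_subtractf nn_def)
    qed
  qed
  then obtain X where X: "\<And>p. X p \<in> span (range m)"
    and Xm: "\<And>p q. inner (m q) (X p) = b0 p * w $ q * H $ p $ q - 1 / nn"
    by metis
  have Xr: "inner (X p - A r) (n q) = b0 p * H $ p $ q" if "r \<noteq> q" for p q r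
  proof -
    have "w $ q * inner (X p - A r) (n q) = inner (m q) (X p - A r)"
      by (simp add: m_def inner_commute)
    also have "\<dots> = w $ q * (b0 p * H $ p $ q)" using that by (simp add: inner_diff_right Xm Am)
    finally show ?thesis using wpos[of q] by simp
  qed
  have XD: "X p - A k \<in> S.D" for p k
    using X[of p] A[of k] spanD by (metis span_diff)
  have footX: "foot A p (X p) = X p - b0 p *\<^sub>R n p" for p
  proof -
    have "foot A p (X p) = X p - inner (X p - A (S.rk p)) (S.N p) *\<^sub>R S.N p"
      by (rule S.foot_formula[OF XD])
    also have "inner (X p - A (S.rk p)) (S.N p) = b0 p"
      using Xr[OF S.rk[of p], of p] hd[of p] by (simp add: NA)
    finally show ?thesis by (simp add: NA)
  qed
  have betaX: "beta A X p = b0 p" for p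
    using b0pos[of p] nnorm[of p] by (simp add: beta_def footX dist_norm)
  have brotX: "b_rot A X p = X p" for p
    by (simp add: b_rot_def betaX footX NA)
  have hmatX: "hmat_of A X = H"
  proof -
    have "hmat_of A X $ p $ q = H $ p $ q" for p q
    proof -
      have "hmat_of A X $ p $ q = inner (X p - A (S.rk q)) (n q) / b0 p"
        by (simp add: hmat_of_def S.rk_def brotX betaX NA)
      also have "\<dots> = H $ p $ q" using Xr[OF S.rk[of q], of p] b0pos[of p] by simp
      finally show ?thesis .
    qed
    then show ?thesis by (simp add: vec_eq_iff)
  qed
  have nsX: "nondeg_simplex (A(p := X p))" for p
  proof (rule ns_crit)
    let ?v = "A(p := X p)" and ?r = "S.rk p"
    have rp: "?r \<noteq> p" by (rule S.rk)
    fix c assume c0: "sum c UNIV = 0" and cv: "(\<Sum>j\<in>UNIV. c j *\<^sub>R ?v j) = 0"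
    have "(\<Sum>j\<in>UNIV. c j *\<^sub>R (?v j - A ?r)) = 0" using sum_shift[OF c0, of ?v "A ?r"] cv by simp
    then have "0 = inner (m p) (\<Sum>j\<in>UNIV. c j *\<^sub>R (?v j - A ?r))" by simp
    also have "\<dots> = (\<Sum>j\<in>UNIV. c j * inner (m p) (?v j - A ?r))" by (simp add: inner_sum_right)
    also have "\<dots> = (\<Sum>j\<in>UNIV. c j * (if j = p then b0 p * w $ p else 0))"
    proof (intro sum.cong refl)
      fix j
      show "c j * inner (m p) ((A(p := X p)) j - A ?r) = c j * (if j = p then b0 p * w $ p else 0)"
      proof (cases "j = p")
        case True
        have "inner (m p) (X p - A ?r) = b0 p * w $ p" using rp hd[of p] by (simp add: inner_diff_right Xm Am)
        then show ?thesis using True by simp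
      next
        case False
        then show ?thesis using rp by (simp add: Adiff)
      qed
    qed
    also have "\<dots> = c p * (b0 p * w $ p)" by (simp add: if_distrib[of "(*) _"] cong: if_cong)
    finally have cp: "c p = 0" using b0pos[of p] wpos[of p] by simp
    have "(\<Sum>j\<in>UNIV. c j *\<^sub>R A j) = (\<Sum>j\<in>UNIV. c j *\<^sub>R ?v j)"
      using cp by (intro sum.cong refl) auto
    then have cA: "(\<Sum>j\<in>UNIV. c j *\<^sub>R A j) = 0" using cv by simp
    show "\<forall>j. c j = 0" using S.ns_coef[OF c0 cA] by blast
  qed
  have "butterfly A X" using nsA nsX by (simp add: butterfly_def)
  moreover have "pair_of A X = (G, H)" by (simp add: pair_of_def gramA hmatX)
  ultimately show ?thesis by blast
qed

lemma Inv_Psi: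
  fixes G H :: "real^'n::finite^'n" and w :: "real^'n"
  assumes card2: "CARD('n) \<ge> 2"
  shows "Inv G H w \<Longrightarrow> (G, H) \<in> Psi"
proof (induction "card {i. w $ i < 0} + card {p. inner (row p H) w < 0}" arbitrary: G H w rule: less_induct)
  case less
  show ?case
  proof (cases "\<exists>p. w $ p < 0")
    case True
    then obtain p where p: "w $ p < 0" by blast
    define w' :: "real^'n" where "w' = (\<chi> i. eps p i * w $ i)"
    let ?x = "a_rev p (G, H)"
    have I': "Inv (fst ?x) (snd ?x) w'" unfolding w'_def by (rule inv_arev(1)[OF less.prems])
    have rows: "inner (row i (snd ?x)) w' = inner (row i H) w" for i
      unfolding w'_def by (rule inv_arev(2)[OF less.prems])
    have s1: "{i. w' $ i < 0} = {i. w $ i < 0} - {p}"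
      using p by (auto simp: w'_def eps_def)
    have lt: "card {i. w' $ i < 0} < card {i. w $ i < 0}"
      unfolding s1 using p by (intro card_Diff1_less) auto
    have s2: "{q. inner (row q (snd ?x)) w' < 0} = {q. inner (row q H) w < 0}"
      by (simp add: rows)
    have "(fst ?x, snd ?x) \<in> Psi"
      by (rule less.hyps[OF _ I']) (use lt s2 in simp)
    then have "?x \<in> Psi" by simp
    then show ?thesis by (rule Psi_arev_back)
  next
    case nw: False
    show ?thesis
    proof (cases "\<exists>p. inner (row p H) w < 0")
      case True
      then obtain p where p: "inner (row p H) w < 0" by blast
      let ?H = "snd (b_rev p (G, H))"
      have I': "Inv G ?H w" by (rule inv_brev(1)[OF less.prems])
      have rp: "inner (row p ?H) w = - inner (row p H) w" by (rule inv_brev(2)[OF less.prems])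
      have ri: "\<And>i. i \<noteq> p \<Longrightarrow> inner (row i ?H) w = inner (row i H) w" by (rule inv_brev(3)[OF less.prems])
      have s2: "{q. inner (row q ?H) w < 0} = {q. inner (row q H) w < 0} - {p}"
      proof (intro set_eqI iffI)
        fix q assume "q \<in> {q. inner (row q ?H) w < 0}"
        then show "q \<in> {q. inner (row q H) w < 0} - {p}"
          using rp ri[of q] p by (cases "q = p") auto
      next
        fix q assume "q \<in> {q. inner (row q H) w < 0} - {p}"
        then show "q \<in> {q. inner (row q ?H) w < 0}" using ri[of q] by auto
      qed
      have lt: "card {q. inner (row q ?H) w < 0} < card {q. inner (row q H) w < 0}"
        unfolding s2 using p by (intro card_Diff1_less) auto
      have "(G, ?H) \<in> Psi"
        by (rule less.hyps[OF _ I']) (use lt in simp)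
      moreover have "b_rev p (G, H) = (G, ?H)" using brev_G[of p G H] by (metis prod.collapse)
      ultimately have "b_rev p (G, H) \<in> Psi" by simp
      then show ?thesis by (rule Psi_brev_back)
    next
      case False
      have wpos: "w $ i > 0" for i
        using nw less.prems by (auto simp: Inv_def) (metis linorder_neqE_linordered_idom)
      have rpos: "inner (row p H) w > 0" for p
        using False less.prems by (auto simp: Inv_def) (metis linorder_neqE_linordered_idom)
      obtain a b where "butterfly a b" "pair_of a b = (G, H)"
        using realize[OF card2 less.prems wpos rpos] by blast
      then show ?thesis using Psi.butterfly_pair by metis
    qed
  qed
qed

theorem mainTheorem13:
  assumes "CARD('n::finite) \<ge> 2"
  shows "(\<forall>G H :: real^'n^'n. inW G H \<longrightarrow>
            ((G, H) \<in> Psi \<longleftrightarrow>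
               (degenerate_psd G \<and>
                (\<forall>S. 2 \<le> card S \<and> card S \<le> CARD('n) - 1 \<longrightarrow> principal_minor G S > 0)) \<and>
               (\<forall>p. row p H \<notin> span (rows G))))
       \<and> (\<forall>a b a' b' :: 'n \<Rightarrow> real^'n. butterfly a b \<longrightarrow> butterfly a' b' \<longrightarrow>
            pair_of a b = pair_of a' b' \<longrightarrow> butterfly_similar a b a' b')"
proof (intro conjI allI impI)
  fix G H :: "real^'n^'n" assume W: "inW G H"
  show "(G, H) \<in> Psi \<longleftrightarrow>
          (degenerate_psd G \<and> (\<forall>S. 2 \<le> card S \<and> card S \<le> CARD('n) - 1 \<longrightarrow> principal_minor G S > 0)) \<and>
          (\<forall>p. row p H \<notin> span (rows G))"
  proof
    assume "(G, H) \<in> Psi"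
    then obtain w where I: "Inv G H w" using Psi_inv[OF _ assms] by fastforce
    show "(degenerate_psd G \<and> (\<forall>S. 2 \<le> card S \<and> card S \<le> CARD('n) - 1 \<longrightarrow> principal_minor G S > 0)) \<and>
          (\<forall>p. row p H \<notin> span (rows G))"
      using Inv_conds[OF I] by blast
  next
    assume c: "(degenerate_psd G \<and> (\<forall>S. 2 \<le> card S \<and> card S \<le> CARD('n) - 1 \<longrightarrow> principal_minor G S > 0)) \<and>
          (\<forall>p. row p H \<notin> span (rows G))"
    then obtain w where "Inv G H w" using conds_Inv[OF assms W] by blast
    then show "(G, H) \<in> Psi" by (rule Inv_Psi[OF assms])
  qed
next
  fix a b a' b' :: "'n \<Rightarrow> real^'n"
  assume "butterfly a b" "butterfly a' b'" "pair_of a b = pair_of a' b'"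
  then show "butterfly_similar a b a' b'" using uniqueness[OF assms] by blast
qed

end
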